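(* Let $E=(E^0,E^1,s,r)$ and $F=(F^0,F^1,s,r)$ be directed graphs. Then $E$ and $F$ are continuously orbit equivalent if and only if the canonical actions $\theta^E$ of $\mathcal{S}_E$ on $\partial E$ and $\theta^F$ of $\mathcal{S}_F$ on $\partial F$ are continuously orbit equivalent.
   Context: For a directed graph $E$: finite paths $\mu=\mu_1\cdots\mu_n$ with $r(\mu_i)=s(\mu_{i+1})$, $E^\star$ finite paths (including vertices, with $s(v)=r(v)=v$), $E^\infty$ infinite paths; singular vertex = sink or infinite emitter; $\partial E=E^\infty\cup\{\mu\in E^\star:r(\mu)\text{ singular}\}$, $\partial E^{\ge n}$ its paths of length $\ge n$; $Z(\mu)=\{\mu x:x\in\partial E,s(x)=r(\mu)\}$; the sets $Z(\mu)\setminus\bigcup_{e\in F}Z(\mu e)$ ($F\subseteq s^{-1}(r(\mu))$ finite) form a basis of the topology of $\partial E$. Shift $\sigma_E:\partial E^{\ge1}\to\partial E$: $\sigma_E(x)=r(x)$ if $|x|=1$, $\sigma_E(x_1x_2\cdots)=x_2\cdots$ if $|x|\ge2$; $\sigma_E^0=\mathrm{id}$. $E$ and $F$ are continuously orbit equivalent if there are a homeomorphism $\varphi:\partial E\to\partial F$ and continuous maps $k,l:\partial E^{\ge1}\to\mathbb{N}$, $k',l':\partial F^{\ge1}\to\mathbb{N}$ with $\sigma_F^{k(x)}(\varphi(\sigma_E(x)))=\sigma_F^{l(x)}(\varphi(x))$ for all $x\in\partial E^{\ge1}$ and $\sigma_E^{k'(y)}(\varphi^{-1}(\sigma_F(y)))=\sigma_E^{l'(y)}(\varphi^{-1}(y))$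 for all $y\in\partial F^{\ge1}$. $\mathcal{S}_E=\{(\mu,\nu)\in E^\star\times E^\star:r(\mu)=r(\nu)\}\cup\{0\}$, $0$ absorbing, $(\mu,\nu)(\zeta,\eta)=(\mu,\eta\gamma)$ if $\nu=\zeta\gamma$, $(\mu\gamma,\eta)$ if $\zeta=\nu\gamma$, else $0$. Canonical action $\theta^E$: $\theta_{(\mu,\nu)}:Z(\nu)\to Z(\mu)$, $\nu x\mapsto\mu x$, $\theta_0$ empty. Two topological partial actions $\theta$ of $S$ on $X$ and $\gamma$ of $T$ on $Y$ (with $\theta_s$ defined on $X_{s^*}$) are continuously orbit equivalent if there are a homeomorphism $\varphi:X\to Y$ and continuous maps $a:S*X\to T$, $b:T*Y\to S$, where $S*X=\{(s,x):x\in X_{s^*}\}\subseteq S\times X$ and $S,T$ are discrete, such that $a(s,x)$ is defined at $\varphi(x)$, $b(t,y)$ at $\varphi^{-1}(y)$, $\varphi(\theta_s(x))=\gamma_{a(s,x)}(\varphi(x))$ and $\varphi^{-1}(\gamma_t(y))=\theta_{b(t,y)}(\varphi^{-1}(y))$. *)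

theory Defs
  imports "HOL-Analysis.Analysis"
begin

record ('v, 'e) dgraph =
  verts :: "'v set"
  edges :: "'e set"
  src   :: "'e \<Rightarrow> 'v"
  rng   :: "'e \<Rightarrow> 'v"

definition wf_graph :: "('v, 'e) dgraph \<Rightarrow> bool" where
  "wf_graph E \<longleftrightarrow> (\<forall>e\<in>edges E. src E e \<in> verts E \<and> rng E e \<in> verts E)"

text \<open>A finite path is a pair (v, es): v is its source vertex and es its list of edges.
  Paths of length 0 are the vertices (v, []).\<close>

definition fpaths :: "('v, 'e) dgraph \<Rightarrow> ('v \<times> 'e list) set" where
  "fpaths E = {(v, es). v \<in> verts E \<and> set es \<subseteq> edges E
      \<and> (es \<noteq> [] \<longrightarrow> src E (hd es) = v)
      \<and> (\<forall>i. Suc i < length es \<longrightarrow> rng E (es ! i) = src E (es ! Suc i))}"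

definition prange :: "('v, 'e) dgraph \<Rightarrow> 'v \<times> 'e list \<Rightarrow> 'v" where
  "prange E \<mu> = (if snd \<mu> = [] then fst \<mu> else rng E (last (snd \<mu>)))"

definition ipaths :: "('v, 'e) dgraph \<Rightarrow> (nat \<Rightarrow> 'e) set" where
  "ipaths E = {x. (\<forall>i. x i \<in> edges E) \<and> (\<forall>i. rng E (x i) = src E (x (Suc i)))}"

definition singular :: "('v, 'e) dgraph \<Rightarrow> 'v \<Rightarrow> bool" where
  "singular E v \<longleftrightarrow> {e \<in> edges E. src E e = v} = {} \<or> infinite {e \<in> edges E. src E e = v}"

datatype ('v, 'e) bpath = Fin 'v "'e list" | Inf "nat \<Rightarrow> 'e"

definition bdry :: "('v, 'e) dgraph \<Rightarrow> ('v, 'e) bpath set" where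
  "bdry E = {Fin v es | v es. (v, es) \<in> fpaths E \<and> singular E (prange E (v, es))}
          \<union> {Inf x | x. x \<in> ipaths E}"

fun blen :: "('v, 'e) bpath \<Rightarrow> enat" where
  "blen (Fin v es) = enat (length es)"
| "blen (Inf x) = \<infinity>"

definition bdry_ge :: "('v, 'e) dgraph \<Rightarrow> nat \<Rightarrow> ('v, 'e) bpath set" where
  "bdry_ge E n = {x \<in> bdry E. enat n \<le> blen x}"

fun bsrc :: "('v, 'e) dgraph \<Rightarrow> ('v, 'e) bpath \<Rightarrow> 'v" where
  "bsrc E (Fin v es) = v"
| "bsrc E (Inf x) = src E (x 0)"

fun pcat :: "'v \<times> 'e list \<Rightarrow> ('v, 'e) bpath \<Rightarrow> ('v, 'e) bpath" where
  "pcat (v, es) (Fin w fs) = Fin v (es @ fs)"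
| "pcat (v, es) (Inf x) = Inf (\<lambda>i. if i < length es then es ! i else x (i - length es))"

definition cyl :: "('v, 'e) dgraph \<Rightarrow> 'v \<times> 'e list \<Rightarrow> ('v, 'e) bpath set" where
  "cyl E \<mu> = {pcat \<mu> x | x. x \<in> bdry E \<and> bsrc E x = prange E \<mu>}"

definition bdry_basis :: "('v, 'e) dgraph \<Rightarrow> ('v, 'e) bpath set set" where
  "bdry_basis E = {cyl E \<mu> - (\<Union>e\<in>G. cyl E (fst \<mu>, snd \<mu> @ [e])) | \<mu> G.
      \<mu> \<in> fpaths E \<and> finite G \<and> G \<subseteq> {e \<in> edges E. src E e = prange E \<mu>}}"

definition bdry_top :: "('v, 'e) dgraph \<Rightarrow> ('v, 'e) bpath topology" where
  "bdry_top E = topology_generated_by (bdry_basis E)"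

text \<open>The shift map (only meaningful on paths of length at least 1;
  on vertices it is the identity, a value never used below).\<close>
fun shift :: "('v, 'e) dgraph \<Rightarrow> ('v, 'e) bpath \<Rightarrow> ('v, 'e) bpath" where
  "shift E (Fin v []) = Fin v []"
| "shift E (Fin v (e # es)) = Fin (rng E e) es"
| "shift E (Inf x) = Inf (\<lambda>i. x (Suc i))"

definition graph_coe :: "('v, 'e) dgraph \<Rightarrow> ('w, 'f) dgraph \<Rightarrow> bool" where
  "graph_coe E F \<longleftrightarrow> (\<exists>\<phi> \<psi> k l k' l'.
     homeomorphic_maps (bdry_top E) (bdry_top F) \<phi> \<psi>
   \<and> continuous_map (subtopology (bdry_top E) (bdry_ge E 1)) (discrete_topology UNIV) (k :: _ \<Rightarrow> nat)
   \<and> continuous_map (subtopology (bdry_top E) (bdry_ge E 1)) (discrete_topology UNIV) (l :: _ \<Rightarrow> nat)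
   \<and> continuous_map (subtopology (bdry_top F) (bdry_ge F 1)) (discrete_topology UNIV) (k' :: _ \<Rightarrow> nat)
   \<and> continuous_map (subtopology (bdry_top F) (bdry_ge F 1)) (discrete_topology UNIV) (l' :: _ \<Rightarrow> nat)
   \<and> (\<forall>x \<in> bdry_ge E 1.
        enat (k x) \<le> blen (\<phi> (shift E x)) \<and> enat (l x) \<le> blen (\<phi> x)
      \<and> (shift F ^^ k x) (\<phi> (shift E x)) = (shift F ^^ l x) (\<phi> x))
   \<and> (\<forall>y \<in> bdry_ge F 1.
        enat (k' y) \<le> blen (\<psi> (shift F y)) \<and> enat (l' y) \<le> blen (\<psi> y)
      \<and> (shift E ^^ k' y) (\<psi> (shift F y)) = (shift E ^^ l' y) (\<psi> y)))"

text \<open>A partial action is given by an index set S (discrete), a space X, the domains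
  dom s (= X_{s*}, the domain of theta_s) and the maps theta s.\<close>

definition action_coe ::
  "'s set \<Rightarrow> 'x topology \<Rightarrow> ('s \<Rightarrow> 'x set) \<Rightarrow> ('s \<Rightarrow> 'x \<Rightarrow> 'x) \<Rightarrow>
   't set \<Rightarrow> 'y topology \<Rightarrow> ('t \<Rightarrow> 'y set) \<Rightarrow> ('t \<Rightarrow> 'y \<Rightarrow> 'y) \<Rightarrow> bool" where
  "action_coe S X domS \<theta> T Y domT \<gamma> \<longleftrightarrow> (\<exists>\<phi> \<psi> a b.
     homeomorphic_maps X Y \<phi> \<psi>
   \<and> continuous_map (subtopology (prod_topology (discrete_topology S) X) {(s, x). s \<in> S \<and> x \<in> domS s})
       (discrete_topology T) a
   \<and> continuous_map (subtopology (prod_topology (discrete_topology T) Y) {(t, y). t \<in> T \<and> y \<in> domT t})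
       (discrete_topology S) b
   \<and> (\<forall>s \<in> S. \<forall>x \<in> domS s. \<phi> x \<in> domT (a (s, x)) \<and> \<phi> (\<theta> s x) = \<gamma> (a (s, x)) (\<phi> x))
   \<and> (\<forall>t \<in> T. \<forall>y \<in> domT t. \<psi> y \<in> domS (b (t, y)) \<and> \<psi> (\<gamma> t y) = \<theta> (b (t, y)) (\<psi> y)))"

text \<open>None stands for 0, Some (mu, nu) for (mu, nu).\<close>
definition graph_semigroup :: "('v, 'e) dgraph \<Rightarrow> (('v \<times> 'e list) \<times> ('v \<times> 'e list)) option set" where
  "graph_semigroup E = {None} \<union>
     {Some (\<mu>, \<nu>) | \<mu> \<nu>. \<mu> \<in> fpaths E \<and> \<nu> \<in> fpaths E \<and> prange E \<mu> = prange E \<nu>}"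

fun can_dom :: "('v, 'e) dgraph \<Rightarrow> (('v \<times> 'e list) \<times> ('v \<times> 'e list)) option \<Rightarrow> ('v, 'e) bpath set" where
  "can_dom E None = {}"
| "can_dom E (Some (\<mu>, \<nu>)) = cyl E \<nu>"

fun can_act :: "('v, 'e) dgraph \<Rightarrow> (('v \<times> 'e list) \<times> ('v \<times> 'e list)) option \<Rightarrow> ('v, 'e) bpath \<Rightarrow> ('v, 'e) bpath" where
  "can_act E None x = x"
| "can_act E (Some (\<mu>, \<nu>)) x =
     (THE z. \<exists>y. y \<in> bdry E \<and> bsrc E y = prange E \<nu> \<and> x = pcat \<nu> y \<and> z = pcat \<mu> y)"

end

theory Submission
  imports Defs
begin

definition lc :: "'a topology \<Rightarrow> ('a \<Rightarrow> 'b) \<Rightarrow> bool" where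
  "lc X f \<longleftrightarrow> (\<forall>x\<in>topspace X. \<exists>U. openin X U \<and> x \<in> U \<and> (\<forall>y\<in>U. f y = f x))"

lemma cont_discrete_iff:
  "continuous_map X (discrete_topology T) f \<longleftrightarrow> f ` topspace X \<subseteq> T \<and> lc X f"
proof
  assume c: "continuous_map X (discrete_topology T) f"
  have im: "f ` topspace X \<subseteq> T" using continuous_map_image_subset_topspace[OF c] by simp
  have "lc X f" unfolding lc_def
  proof
    fix x assume x: "x \<in> topspace X"
    have "f x \<in> T" using im x by blast
    moreover have "\<forall>U\<subseteq>T. openin X {y \<in> topspace X. f y \<in> U}" using c
      unfolding continuous_map_def by simp
    ultimately have "openin X {y \<in> topspace X. f y \<in> {f x}}" by blast
    then show "\<exists>U. openin X U \<and> x \<in> U \<and> (\<forall>y\<in>U. f y = f x)" using x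
      by (intro exI[of _ "{y \<in> topspace X. f y \<in> {f x}}"]) simp
  qed
  then show "f ` topspace X \<subseteq> T \<and> lc X f" using im by simp
next
  assume a: "f ` topspace X \<subseteq> T \<and> lc X f"
  show "continuous_map X (discrete_topology T) f"
    unfolding continuous_map_def
  proof (intro conjI allI impI)
    show "f \<in> topspace X \<rightarrow> topspace (discrete_topology T)" using a by (simp add: image_subset_iff_funcset)
    fix U assume "openin (discrete_topology T) U"
    show "openin X {x \<in> topspace X. f x \<in> U}"
    proof (subst openin_subopen, intro ballI)
      fix x assume x: "x \<in> {x \<in> topspace X. f x \<in> U}"
      then obtain V where V: "openin X V" "x \<in> V" "\<forall>y\<in>V. f y = f x"
        using a unfolding lc_def by blast
      have "V \<subseteq> topspace X" using openin_subset[OF V(1)] .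
      then have "V \<subseteq> {x \<in> topspace X. f x \<in> U}" using V(3) x by auto
      then show "\<exists>T. openin X T \<and> x \<in> T \<and> T \<subseteq> {x \<in> topspace X. f x \<in> U}"
        using V by blast
    qed
  qed
qed
lemma lc_subtop:
  assumes "lc X f" shows "lc (subtopology X S) f"
  unfolding lc_def
proof
  fix x assume "x \<in> topspace (subtopology X S)"
  then have x: "x \<in> topspace X" "x \<in> S" by auto
  then obtain U where U: "openin X U" "x \<in> U" "\<forall>y\<in>U. f y = f x" using assms unfolding lc_def by blast
  have "openin (subtopology X S) (U \<inter> S)" using U(1) by (rule openin_subtopology_Int)
  moreover have "x \<in> U \<inter> S" using U(2) x(2) by blast
  moreover have "\<forall>y\<in>U \<inter> S. f y = f x" using U(3) by blast
  ultimately show "\<exists>U. openin (subtopology X S) U \<and> x \<in> U \<and> (\<forall>y\<in>U. f y = f x)" by blast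
qed

lemma lc_mono:
  assumes "lc (subtopology X S) f" "T \<subseteq> S" shows "lc (subtopology X T) f"
proof -
  have "subtopology (subtopology X S) T = subtopology X T"
    using assms(2) by (simp add: subtopology_subtopology Int_absorb1)
  then show ?thesis using lc_subtop[OF assms(1), of T] by simp
qed

lemma lc_comp:
  assumes "continuous_map X Y g" "lc Y f" shows "lc X (\<lambda>x. f (g x))"
  unfolding lc_def
proof
  fix x assume x: "x \<in> topspace X"
  then have "g x \<in> topspace Y" using continuous_map_image_subset_topspace[OF assms(1)] x by blast
  then obtain U where U: "openin Y U" "g x \<in> U" "\<forall>y\<in>U. f y = f (g x)" using assms(2) unfolding lc_def by blast
  have o: "openin X {x \<in> topspace X. g x \<in> U}" using assms(1) U(1) by (simp add: continuous_map_def)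
  have "x \<in> {x \<in> topspace X. g x \<in> U}" using x U(2) by blast
  moreover have "\<forall>y\<in>{x \<in> topspace X. g x \<in> U}. f (g y) = f (g x)" using U(3) by blast
  ultimately show "\<exists>U. openin X U \<and> x \<in> U \<and> (\<forall>y\<in>U. f (g y) = f (g x))" using o by blast
qed

lemma lc_const: "lc X (\<lambda>x. c)"
  unfolding lc_def
proof
  fix x assume "x \<in> topspace X"
  then show "\<exists>U. openin X U \<and> x \<in> U \<and> (\<forall>y\<in>U. c = c)" using openin_topspace[of X] by blast
qed

lemma lc_combine:
  assumes "lc X f" "lc X g" shows "lc X (\<lambda>x. h (f x) (g x))"
  unfolding lc_def
proof
  fix x assume x: "x \<in> topspace X"
  obtain U where U: "openin X U" "x \<in> U" "\<forall>y\<in>U. f y = f x" using assms(1) x unfolding lc_def by blast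
  obtain V where V: "openin X V" "x \<in> V" "\<forall>y\<in>V. g y = g x" using assms(2) x unfolding lc_def by blast
  have "openin X (U \<inter> V)" using U(1) V(1) by (rule openin_Int)
  moreover have "x \<in> U \<inter> V" using U V by blast
  moreover have "\<forall>y\<in>U \<inter> V. h (f y) (g y) = h (f x) (g x)" using U(3) V(3) by simp
  ultimately show "\<exists>U. openin X U \<and> x \<in> U \<and> (\<forall>y\<in>U. h (f y) (g y) = h (f x) (g x))" by blast
qed

lemma lc_prod:
  assumes "\<forall>s\<in>S. lc (subtopology X (D s)) (\<lambda>x. a (s, x))"
  shows "lc (subtopology (prod_topology (discrete_topology S) X) {(s, x). s \<in> S \<and> x \<in> D s}) a"
  unfolding lc_def
proof
  let ?P = "{(s, x). s \<in> S \<and> x \<in> D s}"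
  fix p assume p: "p \<in> topspace (subtopology (prod_topology (discrete_topology S) X) ?P)"
  obtain s x where sx: "p = (s, x)" by (cases p)
  have s: "s \<in> S" and x: "x \<in> topspace X" "x \<in> D s" using p unfolding sx by simp_all
  then have "lc (subtopology X (D s)) (\<lambda>x. a (s, x))" using assms by blast
  moreover have "x \<in> topspace (subtopology X (D s))" using x by simp
  ultimately obtain U where U: "openin (subtopology X (D s)) U" "x \<in> U" "\<forall>y\<in>U. a (s, y) = a (s, x)"
    unfolding lc_def by blast
  then obtain T where T: "openin X T" "U = T \<inter> D s" by (meson openin_subtopology)
  have "openin (prod_topology (discrete_topology S) X) ({s} \<times> T)"
    using s T by (simp add: openin_prod_Times_iff)
  then have o: "openin (subtopology (prod_topology (discrete_topology S) X) ?P) (({s} \<times> T) \<inter> ?P)"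
    by (rule openin_subtopology_Int)
  have "p \<in> ({s} \<times> T) \<inter> ?P" using sx s x U(2) T(2) by blast
  moreover have "\<forall>y\<in>({s} \<times> T) \<inter> ?P. a y = a p"
  proof
    fix y assume "y \<in> ({s} \<times> T) \<inter> ?P"
    then obtain z where z: "y = (s, z)" "z \<in> T" "z \<in> D s" by blast
    then have "z \<in> U" using T(2) by blast
    then show "a y = a p" using U(3) z(1) sx by simp
  qed
  ultimately show "\<exists>U. openin (subtopology (prod_topology (discrete_topology S) X) ?P) U \<and> p \<in> U \<and> (\<forall>y\<in>U. a y = a p)"
    using o by blast
qed


section \<open>Paths via edge sequences\<close>

fun eds :: "('v, 'e) bpath \<Rightarrow> nat \<Rightarrow> 'e option" where
  "eds (Fin v es) i = (if i < length es then Some (es ! i) else None)"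
| "eds (Inf x) i = Some (x i)"

lemma bpath_eq:
  assumes "bsrc E x = bsrc E y" "eds x = eds y" shows "x = y"
proof -
  have e: "\<And>i. eds x i = eds y i" using assms(2) by simp
  show ?thesis
  proof (cases x)
    case (Fin v es) note X = this
    show ?thesis
    proof (cases y)
      case (Fin w fs) note Y = this
      have len: "length es = length fs"
      proof (rule ccontr)
        assume "length es \<noteq> length fs"
        then consider "length es < length fs" | "length fs < length es" by linarith
        then show False
        proof cases
          case 1 then show False using e[of "length es"] X Y by simp
        next
          case 2 then show False using e[of "length fs"] X Y by simp
        qed
      qed
      have "es = fs"
      proof (rule nth_equalityI)
        show "length es = length fs" by (rule len)
        fix i assume "i < length es"
        then show "es ! i = fs ! i" using e[of i] X Y len by simp
      qed
      moreover have "v = w" using assms(1) X Y by simp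
      ultimately show ?thesis using X Y by simp
    next
      case (Inf z)
      then show ?thesis using e[of "length es"] X by simp
    qed
  next
    case (Inf z) note X = this
    show ?thesis
    proof (cases y)
      case (Fin w fs)
      then show ?thesis using e[of "length fs"] X by simp
    next
      case (Inf z')
      have "z = z'" using e X Inf by (intro ext) simp
      then show ?thesis using X Inf by simp
    qed
  qed
qed

lemma shift_pow_Inf: "(shift E ^^ n) (Inf x) = Inf (\<lambda>i. x (n + i))"
  by (induction n) simp_all

lemma eds_shift: "eds (shift E x) i = eds x (Suc i)"
proof (cases x)
  case (Fin v es) then show ?thesis by (cases es) auto
next
  case (Inf z) then show ?thesis by simp
qed

lemma eds_shiftn: "eds ((shift E ^^ n) x) i = eds x (n + i)"
  by (induction n arbitrary: i) (simp_all add: eds_shift)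

lemma ge_eds: "enat n \<le> blen x \<longleftrightarrow> (\<forall>i<n. eds x i \<noteq> None)"
proof (cases x)
  case (Fin v es)
  have "(n \<le> length es) \<longleftrightarrow> (\<forall>i<n. i < length es)"
  proof
    assume "\<forall>i<n. i < length es" then show "n \<le> length es"
      by (cases n) auto
  qed auto
  moreover have "(\<forall>i<n. eds x i \<noteq> None) \<longleftrightarrow> (\<forall>i<n. i < length es)" using Fin by (simp; blast)
  moreover have "enat n \<le> blen x \<longleftrightarrow> n \<le> length es" using Fin by simp
  ultimately show ?thesis by blast
qed simp

lemma eds_None_mono: "eds x i = None \<Longrightarrow> i \<le> j \<Longrightarrow> eds x j = None"
  by (cases x) (auto split: if_splits)

lemma SL: "enat (m + n) \<le> blen x \<longleftrightarrow> enat n \<le> blen x \<and> enat m \<le> blen ((shift E ^^ n) x)"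
proof -
  have "(\<forall>i<m + n. eds x i \<noteq> None) \<longleftrightarrow> (\<forall>i<n. eds x i \<noteq> None) \<and> (\<forall>i<m. eds x (n + i) \<noteq> None)"
  proof
    assume a: "\<forall>i<m + n. eds x i \<noteq> None"
    show "(\<forall>i<n. eds x i \<noteq> None) \<and> (\<forall>i<m. eds x (n + i) \<noteq> None)"
      using a by simp
  next
    assume a: "(\<forall>i<n. eds x i \<noteq> None) \<and> (\<forall>i<m. eds x (n + i) \<noteq> None)"
    show "\<forall>i<m + n. eds x i \<noteq> None"
    proof (intro allI impI)
      fix i assume "i < m + n"
      show "eds x i \<noteq> None"
      proof (cases "i < n")
        case True then show ?thesis using a by simp
      next
        case False
        then have "i = n + (i - n)" "i - n < m" using \<open>i < m + n\<close> by linarith+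
        then show ?thesis using a by metis
      qed
    qed
  qed
  then show ?thesis by (simp add: ge_eds eds_shiftn)
qed

lemma SL1: "enat n \<le> blen x \<Longrightarrow> enat m \<le> blen ((shift E ^^ n) x) \<Longrightarrow> enat (m + n) \<le> blen x"
  using SL by blast

lemma ge_mono: "enat n \<le> blen x \<Longrightarrow> m \<le> n \<Longrightarrow> enat m \<le> blen x"
  by (meson enat_ord_simps(1) order_trans)

lemma comb:
  assumes e1: "(shift F ^^ a) w = (shift F ^^ b) u" and l1: "enat a \<le> blen w" "enat b \<le> blen u"
    and e2: "(shift F ^^ c) u = (shift F ^^ d) v" and l2: "enat c \<le> blen u" "enat d \<le> blen v"
  shows "(shift F ^^ (a + (max b c - b))) w = (shift F ^^ (d + (max b c - c))) v
      \<and> enat (a + (max b c - b)) \<le> blen w \<and> enat (d + (max b c - c)) \<le> blen v"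
proof -
  let ?N = "max b c"
  have fp: "\<And>m n y. (shift F ^^ (m + n)) y = (shift F ^^ m) ((shift F ^^ n) y)" by (simp add: funpow_add)
  have A1: "(shift F ^^ (a + (?N - b))) w = (shift F ^^ (?N - b)) ((shift F ^^ a) w)"
    using fp[of "?N - b" a w] by (metis add.commute)
  have A2: "(shift F ^^ (?N - b)) ((shift F ^^ b) u) = (shift F ^^ ?N) u"
    using fp[of "?N - b" b u] by (metis le_add_diff_inverse2 max.cobounded1)
  have A: "(shift F ^^ (a + (?N - b))) w = (shift F ^^ ?N) u" using A1 A2 e1 by simp
  have B1: "(shift F ^^ (d + (?N - c))) v = (shift F ^^ (?N - c)) ((shift F ^^ d) v)"
    using fp[of "?N - c" d v] by (metis add.commute)
  have B2: "(shift F ^^ (?N - c)) ((shift F ^^ c) u) = (shift F ^^ ?N) u"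
    using fp[of "?N - c" c u] by (metis le_add_diff_inverse2 max.cobounded2)
  have B: "(shift F ^^ (d + (?N - c))) v = (shift F ^^ ?N) u" using B1 B2 e2 by simp
  have Nu: "enat ?N \<le> blen u" using l1(2) l2(1) by (simp add: max_def)
  have "enat ((?N - b) + b) \<le> blen u" using Nu by simp
  then have "enat (?N - b) \<le> blen ((shift F ^^ b) u)" using SL by blast
  then have "enat (?N - b) \<le> blen ((shift F ^^ a) w)" using e1 by simp
  then have C: "enat ((?N - b) + a) \<le> blen w" using SL1 l1(1) by blast
  have "enat ((?N - c) + c) \<le> blen u" using Nu by simp
  then have "enat (?N - c) \<le> blen ((shift F ^^ c) u)" using SL by blast
  then have "enat (?N - c) \<le> blen ((shift F ^^ d) v)" using e2 by simp
  then have D: "enat ((?N - c) + d) \<le> blen v" using SL1 l2(2) by blast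
  show ?thesis using A B C D by (simp add: add.commute)
qed


definition bend :: "('v, 'e) dgraph \<Rightarrow> ('v, 'e) bpath \<Rightarrow> nat \<Rightarrow> 'v" where
  "bend E x n = (if n = 0 then bsrc E x else rng E (the (eds x (n - 1))))"

definition bok :: "('v, 'e) dgraph \<Rightarrow> ('v, 'e) bpath \<Rightarrow> bool" where
  "bok E x \<longleftrightarrow> (\<forall>i e. eds x i = Some e \<longrightarrow> e \<in> edges E)
    \<and> (\<forall>e. eds x 0 = Some e \<longrightarrow> src E e = bsrc E x)
    \<and> (\<forall>i e e'. eds x i = Some e \<longrightarrow> eds x (Suc i) = Some e' \<longrightarrow> rng E e = src E e')
    \<and> bsrc E x \<in> verts E
    \<and> (\<forall>n. eds x n = None \<longrightarrow> (\<forall>i<n. eds x i \<noteq> None) \<longrightarrow> singular E (bend E x n))"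

lemma bdry_Fin_iff:
  "Fin v es \<in> bdry E \<longleftrightarrow> (v, es) \<in> fpaths E \<and> singular E (prange E (v, es))"
  unfolding bdry_def by auto

lemma bdry_Inf_iff:
  "Inf x \<in> bdry E \<longleftrightarrow> x \<in> ipaths E"
  unfolding bdry_def by auto

lemma bok_Fin:
  "bok E (Fin v es) \<longleftrightarrow> (v, es) \<in> fpaths E \<and> singular E (prange E (v, es))"
proof -
  let ?x = "Fin v es"
  have end1: "(\<forall>n. eds ?x n = None \<longrightarrow> (\<forall>i<n. eds ?x i \<noteq> None) \<longrightarrow> singular E (bend E ?x n))
      \<longleftrightarrow> singular E (prange E (v, es))"
  proof -
    have "eds ?x n = None \<and> (\<forall>i<n. eds ?x i \<noteq> None) \<longleftrightarrow> n = length es" for n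
      by (auto simp: not_less)
    moreover have "bend E ?x (length es) = prange E (v, es)"
      by (cases es rule: rev_cases) (auto simp: bend_def prange_def nth_append)
    ultimately show ?thesis by metis
  qed
  have edg: "(\<forall>i e. eds ?x i = Some e \<longrightarrow> e \<in> edges E) \<longleftrightarrow> set es \<subseteq> edges E"
    unfolding subset_iff in_set_conv_nth by auto
  have hd1: "(\<forall>e. eds ?x 0 = Some e \<longrightarrow> src E e = bsrc E ?x) \<longleftrightarrow> (es \<noteq> [] \<longrightarrow> src E (hd es) = v)"
    by (cases es) auto
  have ch: "(\<forall>i e e'. eds ?x i = Some e \<longrightarrow> eds ?x (Suc i) = Some e' \<longrightarrow> rng E e = src E e')
      \<longleftrightarrow> (\<forall>i. Suc i < length es \<longrightarrow> rng E (es ! i) = src E (es ! Suc i))"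
    by auto
  show ?thesis unfolding bok_def fpaths_def using end1 edg hd1 ch by auto
qed

lemma bok_Inf:
  assumes "wf_graph E"
  shows "bok E (Inf x) \<longleftrightarrow> x \<in> ipaths E"
proof
  assume "bok E (Inf x)"
  then show "x \<in> ipaths E" unfolding bok_def ipaths_def by auto
next
  assume a: "x \<in> ipaths E"
  then have "src E (x 0) \<in> verts E" using assms unfolding wf_graph_def ipaths_def by blast
  then show "bok E (Inf x)" using a unfolding bok_def ipaths_def by auto
qed

lemma bdry_iff: "wf_graph E \<Longrightarrow> x \<in> bdry E \<longleftrightarrow> bok E x"
  by (cases x) (simp_all add: bdry_Fin_iff bok_Fin bdry_Inf_iff bok_Inf)

lemma bsrc_shift:
  assumes "bok E x" "eds x 0 = Some e"
  shows "bsrc E (shift E x) = rng E e"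
proof (cases x)
  case (Fin v es)
  then show ?thesis using assms(2) by (cases es) auto
next
  case (Inf z)
  then show ?thesis using assms unfolding bok_def by (metis bsrc.simps(2) eds.simps(2) shift.simps(3))
qed

lemma shift_bok:
  assumes wf: "wf_graph E" and b: "bok E x"
  shows "bok E (shift E x)"
proof (cases "eds x 0")
  case None
  then obtain v where "x = Fin v []" by (cases x) (auto split: if_splits)
  then show ?thesis using b by simp
next
  case (Some e0)
  have bs: "bsrc E (shift E x) = rng E e0" using bsrc_shift[OF b Some] .
  have e0: "e0 \<in> edges E" using b Some unfolding bok_def by blast
  have v: "rng E e0 \<in> verts E" using wf e0 unfolding wf_graph_def by blast
  have be: "bend E (shift E x) n = bend E x (Suc n)" for n
    using bs Some by (simp add: bend_def eds_shift)
  show ?thesis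
    unfolding bok_def
  proof (intro conjI allI impI)
    show "e \<in> edges E" if "eds (shift E x) i = Some e" for i e
      using b that unfolding bok_def eds_shift by blast
    show "src E e = bsrc E (shift E x)" if "eds (shift E x) 0 = Some e" for e
      using b that Some bs unfolding bok_def eds_shift by metis
    show "rng E e = src E e'" if "eds (shift E x) i = Some e" "eds (shift E x) (Suc i) = Some e'" for i e e'
      using b that unfolding bok_def eds_shift by blast
    show "bsrc E (shift E x) \<in> verts E" using bs v by simp
    show "singular E (bend E (shift E x) n)"
      if "eds (shift E x) n = None" "\<forall>i<n. eds (shift E x) i \<noteq> None" for n
    proof -
      have "eds x (Suc n) = None" using that(1) by (simp add: eds_shift)
      moreover have "\<forall>i<Suc n. eds x i \<noteq> None"
      proof (intro allI impI)
        fix i assume "i < Suc n"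
        then show "eds x i \<noteq> None" using that(2) Some
          by (cases i) (auto simp: eds_shift)
      qed
      ultimately show ?thesis using b be unfolding bok_def by metis
    qed
  qed
qed

lemma shiftn_bok: "wf_graph E \<Longrightarrow> bok E x \<Longrightarrow> bok E ((shift E ^^ n) x)"
  by (induction n) (simp_all add: shift_bok)

lemma bsrc_shiftn:
  assumes "wf_graph E" "bok E x" "eds x n = Some e"
  shows "bsrc E ((shift E ^^ Suc n) x) = rng E e"
proof -
  have "bok E ((shift E ^^ n) x)" using shiftn_bok assms(1,2) by blast
  moreover have "eds ((shift E ^^ n) x) 0 = Some e" using assms(3) by (simp add: eds_shiftn)
  ultimately show ?thesis using bsrc_shift by simp
qed

lemma eds_pcat: "eds (pcat (v, es) z) i = (if i < length es then Some (es ! i) else eds z (i - length es))"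
  by (cases z) (auto simp: nth_append)

lemma bsrc_pcat:
  assumes "es \<noteq> [] \<longrightarrow> src E (hd es) = v" "es = [] \<longrightarrow> bsrc E z = v"
  shows "bsrc E (pcat (v, es) z) = v"
proof (cases z)
  case (Fin w fs) then show ?thesis by simp
next
  case (Inf y)
  then show ?thesis using assms by (cases es) auto
qed

lemma fpaths_D:
  assumes "(v, es) \<in> fpaths E"
  shows "v \<in> verts E" "set es \<subseteq> edges E" "es \<noteq> [] \<Longrightarrow> src E (hd es) = v"
    "Suc i < length es \<Longrightarrow> rng E (es ! i) = src E (es ! Suc i)"
  using assms unfolding fpaths_def by auto

lemma prange_last: "es \<noteq> [] \<Longrightarrow> prange E (v, es) = rng E (es ! (length es - 1))"
  by (simp add: prange_def last_conv_nth)

lemma pcat_bok: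
  assumes p: "(v, es) \<in> fpaths E" and z: "bok E z" and s: "bsrc E z = prange E (v, es)"
  shows "bok E (pcat (v, es) z)"
proof -
  let ?y = "pcat (v, es) z"
  let ?L = "length es"
  have bs: "bsrc E ?y = v"
    by (rule bsrc_pcat) (use fpaths_D(3)[OF p] s in \<open>auto simp: prange_def\<close>)
  show ?thesis
    unfolding bok_def
  proof (intro conjI allI impI)
    show "e \<in> edges E" if "eds ?y i = Some e" for i e
    proof (cases "i < ?L")
      case True then show ?thesis using that fpaths_D(2)[OF p] by (auto simp: eds_pcat)
    next
      case False then show ?thesis using that z unfolding bok_def by (auto simp: eds_pcat)
    qed
    show "src E e = bsrc E ?y" if "eds ?y 0 = Some e" for e
    proof (cases "es = []")
      case True then show ?thesis using that z s bs unfolding bok_def by (auto simp: eds_pcat prange_def)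
    next
      case False then show ?thesis using that fpaths_D(3)[OF p] bs by (auto simp: eds_pcat hd_conv_nth)
    qed
    show "rng E e = src E e'" if "eds ?y i = Some e" "eds ?y (Suc i) = Some e'" for i e e'
    proof -
      consider "Suc i < ?L" | "Suc i = ?L" | "?L \<le> i" by linarith
      then show ?thesis
      proof cases
        case 1 then show ?thesis using that fpaths_D(4)[OF p] by (auto simp: eds_pcat)
      next
        case 2
        then have "e = es ! i" "i = ?L - 1" "es \<noteq> []" "eds z 0 = Some e'" using that by (auto simp: eds_pcat)
        then show ?thesis using z s prange_last[of es E v] unfolding bok_def by simp
      next
        case 3
        then have "eds z (i - ?L) = Some e" "eds z (Suc (i - ?L)) = Some e'" using that
          by (auto simp: eds_pcat Suc_diff_le)
        then show ?thesis using z unfolding bok_def by blast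
      qed
    qed
    show "bsrc E ?y \<in> verts E" using bs fpaths_D(1)[OF p] by simp
    show "singular E (bend E ?y n)" if "eds ?y n = None" "\<forall>i<n. eds ?y i \<noteq> None" for n
    proof -
      have nL: "?L \<le> n" using that(1) by (auto simp: eds_pcat split: if_splits)
      have "eds z (n - ?L) = None" using that(1) nL by (simp add: eds_pcat)
      moreover have "\<forall>i<n - ?L. eds z i \<noteq> None"
      proof (intro allI impI)
        fix i assume "i < n - ?L"
        then have "i + ?L < n" by simp
        then show "eds z i \<noteq> None" using that(2) by (auto simp: eds_pcat dest!: spec[of _ "i + ?L"])
      qed
      ultimately have sg: "singular E (bend E z (n - ?L))" using z unfolding bok_def by blast
      have "bend E z (n - ?L) = bend E ?y n"
      proof (cases "n = ?L")
        case True
        then show ?thesis using s bs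
          by (cases "es = []") (auto simp: bend_def eds_pcat prange_def last_conv_nth)
      next
        case False
        then have "n - ?L - 1 = n - 1 - ?L" "\<not> n - 1 < ?L" "n \<noteq> 0" "n - ?L \<noteq> 0" using nL by auto
        then show ?thesis using False by (simp add: bend_def eds_pcat)
      qed
      then show ?thesis using sg by simp
    qed
  qed
qed


section \<open>Prefixes and cylinders\<close>

definition ptake :: "('v, 'e) dgraph \<Rightarrow> nat \<Rightarrow> ('v, 'e) bpath \<Rightarrow> 'v \<times> 'e list" where
  "ptake E n x = (bsrc E x, map (\<lambda>i. the (eds x i)) [0..<n])"

lemma ptake_len [simp]: "length (snd (ptake E n x)) = n" "fst (ptake E n x) = bsrc E x"
  by (simp_all add: ptake_def)

lemma ptake_nth: "i < n \<Longrightarrow> snd (ptake E n x) ! i = the (eds x i)"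
  by (simp add: ptake_def)

lemma ptake_fpaths:
  assumes b: "bok E x" and n: "enat n \<le> blen x"
  shows "ptake E n x \<in> fpaths E"
proof -
  have S: "\<And>i. i < n \<Longrightarrow> eds x i = Some (the (eds x i))" using n by (auto simp: ge_eds)
  show ?thesis
    unfolding fpaths_def ptake_def
  proof (clarify, intro conjI)
    show "bsrc E x \<in> verts E" using b unfolding bok_def by blast
    show "set (map (\<lambda>i. the (eds x i)) [0..<n]) \<subseteq> edges E"
    proof
      fix e assume "e \<in> set (map (\<lambda>i. the (eds x i)) [0..<n])"
      then obtain i where "i < n" "e = the (eds x i)" by auto
      then show "e \<in> edges E" using S b unfolding bok_def by metis
    qed
    show "map (\<lambda>i. the (eds x i)) [0..<n] \<noteq> [] \<longrightarrow> src E (hd (map (\<lambda>i. the (eds x i)) [0..<n])) = bsrc E x"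
    proof
      assume "map (\<lambda>i. the (eds x i)) [0..<n] \<noteq> []"
      then have "0 < n" by simp
      then have "hd (map (\<lambda>i. the (eds x i)) [0..<n]) = the (eds x 0)" by (simp add: hd_map)
      then show "src E (hd (map (\<lambda>i. the (eds x i)) [0..<n])) = bsrc E x"
        using S[OF \<open>0 < n\<close>] b unfolding bok_def by metis
    qed
    show "\<forall>i. Suc i < length (map (\<lambda>i. the (eds x i)) [0..<n]) \<longrightarrow>
        rng E (map (\<lambda>i. the (eds x i)) [0..<n] ! i) = src E (map (\<lambda>i. the (eds x i)) [0..<n] ! Suc i)"
    proof (intro allI impI)
      fix i assume "Suc i < length (map (\<lambda>i. the (eds x i)) [0..<n])"
      then have i: "Suc i < n" by simp
      then have "eds x i = Some (the (eds x i))" "eds x (Suc i) = Some (the (eds x (Suc i)))" using S by auto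
      then show "rng E (map (\<lambda>i. the (eds x i)) [0..<n] ! i) = src E (map (\<lambda>i. the (eds x i)) [0..<n] ! Suc i)"
        using i b unfolding bok_def by simp
    qed
  qed
qed

lemma ptake_prange:
  assumes wf: "wf_graph E" and b: "bok E x" and n: "enat n \<le> blen x"
  shows "prange E (ptake E n x) = bsrc E ((shift E ^^ n) x)"
proof (cases n)
  case 0 then show ?thesis by (simp add: ptake_def prange_def)
next
  case (Suc m)
  then have "eds x m = Some (the (eds x m))" using n by (auto simp: ge_eds)
  then have "bsrc E ((shift E ^^ Suc m) x) = rng E (the (eds x m))" using bsrc_shiftn[OF wf b] by blast
  then show ?thesis using Suc by (simp add: ptake_def prange_def)
qed

lemma cyl_iff:
  assumes wf: "wf_graph E" and b: "bok E x" and h: "es \<noteq> [] \<longrightarrow> src E (hd es) = v"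
  shows "x \<in> cyl E (v, es) \<longleftrightarrow> bsrc E x = v \<and> (\<forall>i<length es. eds x i = Some (es ! i))"
proof
  assume "x \<in> cyl E (v, es)"
  then obtain z where z: "x = pcat (v, es) z" "z \<in> bdry E" "bsrc E z = prange E (v, es)"
    unfolding cyl_def by blast
  have "bsrc E x = v" unfolding z(1) by (rule bsrc_pcat) (use h z(3) in \<open>auto simp: prange_def\<close>)
  then show "bsrc E x = v \<and> (\<forall>i<length es. eds x i = Some (es ! i))" using z(1) by (simp add: eds_pcat)
next
  assume a: "bsrc E x = v \<and> (\<forall>i<length es. eds x i = Some (es ! i))"
  let ?L = "length es"
  let ?z = "(shift E ^^ ?L) x"
  have zb: "?z \<in> bdry E" using bdry_iff[OF wf] shiftn_bok[OF wf b] by blast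
  have zs: "bsrc E ?z = prange E (v, es)"
  proof (cases "es = []")
    case True then show ?thesis using a by (simp add: prange_def)
  next
    case False
    then have "eds x (?L - 1) = Some (es ! (?L - 1))" using a by simp
    then have "bsrc E ((shift E ^^ Suc (?L - 1)) x) = rng E (es ! (?L - 1))" using bsrc_shiftn[OF wf b] by blast
    then show ?thesis using False by (simp add: prange_last)
  qed
  have "x = pcat (v, es) ?z"
  proof (rule bpath_eq[where E = E])
    have "bsrc E (pcat (v, es) ?z) = v" by (rule bsrc_pcat) (use h a in auto)
    then show "bsrc E x = bsrc E (pcat (v, es) ?z)" using a by simp
    show "eds x = eds (pcat (v, es) ?z)"
    proof
      fix i show "eds x i = eds (pcat (v, es) ?z) i"
        using a by (auto simp: eds_pcat eds_shiftn)
    qed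
  qed
  then show "x \<in> cyl E (v, es)" unfolding cyl_def using zb zs by blast
qed

lemma SP:
  assumes wf: "wf_graph E" and p: "(v, es) \<in> fpaths E" and z: "bok E z" and s: "bsrc E z = prange E (v, es)"
  shows "(shift E ^^ length es) (pcat (v, es) z) = z"
proof (rule bpath_eq[where E = E])
  show "eds ((shift E ^^ length es) (pcat (v, es) z)) = eds z"
    by (rule ext) (simp add: eds_shiftn eds_pcat)
  have y: "bok E (pcat (v, es) z)" using pcat_bok[OF p z s] .
  show "bsrc E ((shift E ^^ length es) (pcat (v, es) z)) = bsrc E z"
  proof (cases "es = []")
    case True
    have "bsrc E (pcat (v, es) z) = v" by (rule bsrc_pcat) (use True s in \<open>auto simp: prange_def\<close>)
    then show ?thesis using True s by (simp add: prange_def)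
  next
    case False
    have "eds (pcat (v, es) z) (length es - 1) = Some (es ! (length es - 1))"
      using False by (simp add: eds_pcat)
    then have "bsrc E ((shift E ^^ Suc (length es - 1)) (pcat (v, es) z)) = rng E (es ! (length es - 1))"
      using bsrc_shiftn[OF wf y] by blast
    then show ?thesis using False s by (simp add: prange_last)
  qed
qed

lemma pcat_inj:
  assumes wf: "wf_graph E" and p: "(v, es) \<in> fpaths E"
    and "bok E z" "bsrc E z = prange E (v, es)" "bok E z'" "bsrc E z' = prange E (v, es)"
    and "pcat (v, es) z = pcat (v, es) z'"
  shows "z = z'"
  using SP[OF wf p assms(3,4)] SP[OF wf p assms(5,6)] assms(7) by metis

lemma can_act_eq:
  assumes wf: "wf_graph E" and p: "(v, es) \<in> fpaths E" and y: "y \<in> bdry E" and s: "bsrc E y = prange E (v, es)"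
  shows "can_act E (Some (\<mu>, (v, es))) (pcat (v, es) y) = pcat \<mu> y"
proof -
  have yb: "bok E y" using y bdry_iff[OF wf] by blast
  show ?thesis
    unfolding can_act.simps
  proof (rule the_equality)
    show "\<exists>ya. ya \<in> bdry E \<and> bsrc E ya = prange E (v, es) \<and> pcat (v, es) y = pcat (v, es) ya \<and> pcat \<mu> y = pcat \<mu> ya"
      using y s by blast
    fix z assume "\<exists>ya. ya \<in> bdry E \<and> bsrc E ya = prange E (v, es) \<and> pcat (v, es) y = pcat (v, es) ya \<and> z = pcat \<mu> ya"
    then obtain y' where y': "y' \<in> bdry E" "bsrc E y' = prange E (v, es)" "pcat (v, es) y = pcat (v, es) y'" "z = pcat \<mu> y'"
      by blast
    have "bok E y'" using y'(1) bdry_iff[OF wf] by blast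
    then have "y = y'" using pcat_inj[OF wf p yb s _ y'(2) y'(3)] by blast
    then show "z = pcat \<mu> y" using y'(4) by simp
  qed
qed

lemma cyl_sub:
  assumes wf: "wf_graph E" and p: "(v, es) \<in> fpaths E"
  shows "cyl E (v, es) \<subseteq> bdry E"
proof
  fix x assume "x \<in> cyl E (v, es)"
  then obtain z where z: "x = pcat (v, es) z" "z \<in> bdry E" "bsrc E z = prange E (v, es)"
    unfolding cyl_def by blast
  have "bok E z" using z(2) bdry_iff[OF wf] by blast
  then have "bok E x" using pcat_bok[OF p _ z(3)] z(1) by simp
  then show "x \<in> bdry E" using bdry_iff[OF wf] by blast
qed

lemma topspace_bdry:
  assumes wf: "wf_graph E"
  shows "topspace (bdry_top E) = bdry E"
proof -
  have "\<Union>(bdry_basis E) = bdry E"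
  proof
    show "\<Union>(bdry_basis E) \<subseteq> bdry E"
    proof
      fix x assume "x \<in> \<Union>(bdry_basis E)"
      then obtain \<mu> G where "x \<in> cyl E \<mu>" "\<mu> \<in> fpaths E" unfolding bdry_basis_def by blast
      then show "x \<in> bdry E" using cyl_sub[OF wf, of "fst \<mu>" "snd \<mu>"] by auto
    qed
    show "bdry E \<subseteq> \<Union>(bdry_basis E)"
    proof
      fix x assume x: "x \<in> bdry E"
      then have b: "bok E x" using bdry_iff[OF wf] by blast
      have p: "(bsrc E x, []) \<in> fpaths E" using b unfolding bok_def fpaths_def by simp
      have c: "x \<in> cyl E (bsrc E x, [])" using cyl_iff[OF wf b, of "[]" "bsrc E x"] by simp
      have "cyl E (bsrc E x, []) - (\<Union>e\<in>{}. cyl E (fst (bsrc E x, []), snd (bsrc E x, []) @ [e])) \<in> bdry_basis E"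
        unfolding bdry_basis_def using p by blast
      then show "x \<in> \<Union>(bdry_basis E)" using c by blast
    qed
  qed
  then show ?thesis unfolding bdry_top_def by simp
qed

definition nb :: "('v, 'e) dgraph \<Rightarrow> ('v, 'e) bpath \<Rightarrow> nat \<Rightarrow> 'e set \<Rightarrow> ('v, 'e) bpath set" where
  "nb E x n G = {y \<in> bdry E. bsrc E y = bsrc E x \<and> (\<forall>i<n. eds y i = eds x i) \<and> (\<forall>e\<in>G. eds y n \<noteq> Some e)}"

lemma bsrc_shiftn_agree:
  assumes wf: "wf_graph E" and "bok E x" "bok E y" "bsrc E y = bsrc E x" "\<forall>i<n. eds y i = eds x i" "enat n \<le> blen x"
  shows "bsrc E ((shift E ^^ n) y) = bsrc E ((shift E ^^ n) x)"
proof (cases n)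
  case 0 then show ?thesis using assms by simp
next
  case (Suc m)
  then have ex: "eds x m = Some (the (eds x m))" using assms(6) by (auto simp: ge_eds)
  then have ey: "eds y m = Some (the (eds x m))" using assms(5) Suc by auto
  show ?thesis using bsrc_shiftn[OF wf assms(2) ex] bsrc_shiftn[OF wf assms(3) ey] Suc by simp
qed

lemma bset_iff:
  assumes wf: "wf_graph E" and p: "(v, es) \<in> fpaths E" and G: "G \<subseteq> {e \<in> edges E. src E e = prange E (v, es)}"
    and x: "bok E x"
  shows "x \<in> cyl E (v, es) - (\<Union>e\<in>G. cyl E (v, es @ [e])) \<longleftrightarrow>
    bsrc E x = v \<and> (\<forall>i<length es. eds x i = Some (es ! i)) \<and> (\<forall>e\<in>G. eds x (length es) \<noteq> Some e)"
proof -
  have h: "es \<noteq> [] \<longrightarrow> src E (hd es) = v" using fpaths_D(3)[OF p] by blast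
  have c1: "x \<in> cyl E (v, es) \<longleftrightarrow> bsrc E x = v \<and> (\<forall>i<length es. eds x i = Some (es ! i))"
    using cyl_iff[OF wf x h] .
  have c2: "x \<in> cyl E (v, es @ [e]) \<longleftrightarrow> (bsrc E x = v \<and> (\<forall>i<length es. eds x i = Some (es ! i))) \<and> eds x (length es) = Some e"
    if e: "e \<in> G" for e
  proof -
    have h2: "es @ [e] \<noteq> [] \<longrightarrow> src E (hd (es @ [e])) = v"
    proof (cases "es = []")
      case True then show ?thesis using e G by (auto simp: prange_def)
    next
      case False then show ?thesis using h by simp
    qed
    have "(\<forall>i<length (es @ [e]). eds x i = Some ((es @ [e]) ! i)) \<longleftrightarrow>
        (\<forall>i<length es. eds x i = Some (es ! i)) \<and> eds x (length es) = Some e"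
    proof
      assume a: "\<forall>i<length (es @ [e]). eds x i = Some ((es @ [e]) ! i)"
      show "(\<forall>i<length es. eds x i = Some (es ! i)) \<and> eds x (length es) = Some e"
      proof (intro conjI allI impI)
        fix i assume "i < length es" then show "eds x i = Some (es ! i)" using a[rule_format, of i] by (simp add: nth_append)
      next
        show "eds x (length es) = Some e" using a[rule_format, of "length es"] by simp
      qed
    next
      assume a: "(\<forall>i<length es. eds x i = Some (es ! i)) \<and> eds x (length es) = Some e"
      show "\<forall>i<length (es @ [e]). eds x i = Some ((es @ [e]) ! i)"
      proof (intro allI impI)
        fix i assume "i < length (es @ [e])"
        then consider "i < length es" | "i = length es" by fastforce
        then show "eds x i = Some ((es @ [e]) ! i)" using a by cases (simp_all add: nth_append)
      qed
    qed
    then show ?thesis using cyl_iff[OF wf x h2] by simp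
  qed
  show ?thesis using c1 c2 by blast
qed

lemma nb_open:
  assumes wf: "wf_graph E" and x: "x \<in> bdry E" and n: "enat n \<le> blen x" and G: "finite G"
  shows "openin (bdry_top E) (nb E x n G)"
proof -
  have b: "bok E x" using x bdry_iff[OF wf] by blast
  obtain v es where ve: "ptake E n x = (v, es)" by (cases "ptake E n x")
  have v: "v = bsrc E x" and L: "length es = n" using ve ptake_len[of E n x] by (metis fst_conv snd_conv)+
  have es: "\<And>i. i < n \<Longrightarrow> es ! i = the (eds x i)" using ptake_nth[of _ n E x] ve by simp
  have S: "\<And>i. i < n \<Longrightarrow> eds x i = Some (the (eds x i))" using n by (auto simp: ge_eds)
  have p: "(v, es) \<in> fpaths E" using ptake_fpaths[OF b n] ve by simp
  have pr: "prange E (v, es) = bsrc E ((shift E ^^ n) x)" using ptake_prange[OF wf b n] ve by simp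
  define G' where "G' = {e \<in> G. e \<in> edges E \<and> src E e = prange E (v, es)}"
  have G'1: "finite G'" using G unfolding G'_def by simp
  have G'2: "G' \<subseteq> {e \<in> edges E. src E e = prange E (v, es)}" unfolding G'_def by blast
  have inb: "cyl E (v, es) - (\<Union>e\<in>G'. cyl E (fst (v, es), snd (v, es) @ [e])) \<in> bdry_basis E"
    unfolding bdry_basis_def using p G'1 G'2 by blast
  have eq: "cyl E (v, es) - (\<Union>e\<in>G'. cyl E (v, es @ [e])) = nb E x n G"
  proof
    show "cyl E (v, es) - (\<Union>e\<in>G'. cyl E (v, es @ [e])) \<subseteq> nb E x n G"
    proof
      fix y assume y: "y \<in> cyl E (v, es) - (\<Union>e\<in>G'. cyl E (v, es @ [e]))"
      have yb: "y \<in> bdry E" using y cyl_sub[OF wf p] by blast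
      then have bky: "bok E y" using bdry_iff[OF wf] by blast
      have c: "bsrc E y = v \<and> (\<forall>i<length es. eds y i = Some (es ! i)) \<and> (\<forall>e\<in>G'. eds y (length es) \<noteq> Some e)"
        using bset_iff[OF wf p G'2 bky] y by blast
      have ag: "\<forall>i<n. eds y i = eds x i" using c L es S by metis
      have "\<forall>e\<in>G. eds y n \<noteq> Some e"
      proof (intro ballI notI)
        fix e assume e: "e \<in> G" "eds y n = Some e"
        have "e \<in> edges E" using bky e(2) unfolding bok_def by blast
        moreover have "src E e = bsrc E ((shift E ^^ n) y)"
        proof -
          have "bok E ((shift E ^^ n) y)" using shiftn_bok[OF wf bky] .
          moreover have "eds ((shift E ^^ n) y) 0 = Some e" using e(2) by (simp add: eds_shiftn)
          ultimately show ?thesis unfolding bok_def by blast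
        qed
        moreover have "bsrc E ((shift E ^^ n) y) = bsrc E ((shift E ^^ n) x)"
          using bsrc_shiftn_agree[OF wf b bky _ ag n] c v by simp
        ultimately have "e \<in> G'" unfolding G'_def using e(1) pr by simp
        then show False using c e(2) L by blast
      qed
      then show "y \<in> nb E x n G" unfolding nb_def using yb c v ag by blast
    qed
    show "nb E x n G \<subseteq> cyl E (v, es) - (\<Union>e\<in>G'. cyl E (v, es @ [e]))"
    proof
      fix y assume y: "y \<in> nb E x n G"
      then have bky: "bok E y" using bdry_iff[OF wf] unfolding nb_def by blast
      have "bsrc E y = v \<and> (\<forall>i<length es. eds y i = Some (es ! i)) \<and> (\<forall>e\<in>G'. eds y (length es) \<noteq> Some e)"
        using y v L es S unfolding nb_def G'_def by auto
      then show "y \<in> cyl E (v, es) - (\<Union>e\<in>G'. cyl E (v, es @ [e]))" using bset_iff[OF wf p G'2 bky] by blast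
    qed
  qed
  show ?thesis unfolding bdry_top_def using topology_generated_by_Basis[OF inb] eq by simp
qed

lemma in_nb: "x \<in> bdry E \<Longrightarrow> (\<forall>e\<in>G. eds x n \<noteq> Some e) \<Longrightarrow> x \<in> nb E x n G"
  unfolding nb_def by blast

lemma bdry_ge_open:
  assumes wf: "wf_graph E"
  shows "openin (bdry_top E) (bdry_ge E n)"
proof (subst openin_subopen, intro ballI)
  fix x assume x: "x \<in> bdry_ge E n"
  then have xb: "x \<in> bdry E" and n: "enat n \<le> blen x" unfolding bdry_ge_def by auto
  have "nb E x n {} \<subseteq> bdry_ge E n"
  proof
    fix y assume "y \<in> nb E x n {}"
    then have "y \<in> bdry E" "\<forall>i<n. eds y i = eds x i" unfolding nb_def by auto
    then show "y \<in> bdry_ge E n" using n unfolding bdry_ge_def ge_eds by simp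
  qed
  then show "\<exists>T. openin (bdry_top E) T \<and> x \<in> T \<and> T \<subseteq> bdry_ge E n"
    using nb_open[OF wf xb n] in_nb[OF xb, of "{}"] by blast
qed


section \<open>Continuity\<close>

lemma cont_bdry:
  assumes wf: "wf_graph F" and im: "\<And>x. x \<in> topspace X \<Longrightarrow> f x \<in> bdry F"
    and H: "\<And>x n G. x \<in> topspace X \<Longrightarrow> finite G \<Longrightarrow> enat n \<le> blen (f x) \<Longrightarrow> (\<forall>e\<in>G. eds (f x) n \<noteq> Some e)
       \<Longrightarrow> \<exists>U. openin X U \<and> x \<in> U \<and> (\<forall>y\<in>U. f y \<in> nb F (f x) n G)"
  shows "continuous_map X (bdry_top F) f"
  unfolding bdry_top_def
proof (rule continuous_on_generated_topo)
  show "f ` topspace X \<subseteq> \<Union>(bdry_basis F)"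
    using im topspace_bdry[OF wf] unfolding bdry_top_def by auto
  fix B assume "B \<in> bdry_basis F"
  then obtain v es G where B: "B = cyl F (v, es) - (\<Union>e\<in>G. cyl F (v, es @ [e]))" and p: "(v, es) \<in> fpaths F"
    and G: "finite G" "G \<subseteq> {e \<in> edges F. src F e = prange F (v, es)}"
    unfolding bdry_basis_def by fastforce
  show "openin X (f -` B \<inter> topspace X)"
  proof (subst openin_subopen, intro ballI)
    fix x assume x: "x \<in> f -` B \<inter> topspace X"
    then have fx: "bok F (f x)" using im bdry_iff[OF wf] by blast
    have c: "bsrc F (f x) = v \<and> (\<forall>i<length es. eds (f x) i = Some (es ! i)) \<and> (\<forall>e\<in>G. eds (f x) (length es) \<noteq> Some e)"
      using bset_iff[OF wf p G(2) fx] x B by blast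
    then have n: "enat (length es) \<le> blen (f x)" by (simp add: ge_eds)
    obtain U where U: "openin X U" "x \<in> U" "\<forall>y\<in>U. f y \<in> nb F (f x) (length es) G"
      using H[OF _ G(1) n] x c by blast
    have "U \<subseteq> f -` B \<inter> topspace X"
    proof
      fix y assume y: "y \<in> U"
      then have yt: "y \<in> topspace X" using openin_subset[OF U(1)] by blast
      have "f y \<in> nb F (f x) (length es) G" using U(3) y by blast
      then have fy: "f y \<in> bdry F" "bsrc F (f y) = v" "\<forall>i<length es. eds (f y) i = Some (es ! i)"
          "\<forall>e\<in>G. eds (f y) (length es) \<noteq> Some e"
        using c unfolding nb_def by auto
      have "bok F (f y)" using fy(1) bdry_iff[OF wf] by blast
      then have "f y \<in> B" using bset_iff[OF wf p G(2)] fy B by blast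
      then show "y \<in> f -` B \<inter> topspace X" using yt by blast
    qed
    then show "\<exists>T. openin X T \<and> x \<in> T \<and> T \<subseteq> f -` B \<inter> topspace X" using U by blast
  qed
qed

lemma bdry_ge_mono: "n \<le> m \<Longrightarrow> bdry_ge E m \<subseteq> bdry_ge E n"
  unfolding bdry_ge_def using ge_mono by blast

lemma shiftn_ge:
  assumes wf: "wf_graph E" and x: "x \<in> bdry_ge E (m + n)"
  shows "(shift E ^^ n) x \<in> bdry_ge E m"
proof -
  have "x \<in> bdry E" "enat (m + n) \<le> blen x" using x unfolding bdry_ge_def by auto
  then show ?thesis unfolding bdry_ge_def using bdry_iff[OF wf] shiftn_bok[OF wf] SL by blast
qed

lemma shift_cont:
  assumes wf: "wf_graph E"
  shows "continuous_map (subtopology (bdry_top E) (bdry_ge E 1)) (bdry_top E) (shift E)"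
proof (rule cont_bdry[OF wf])
  fix x assume "x \<in> topspace (subtopology (bdry_top E) (bdry_ge E 1))"
  then have x: "x \<in> bdry_ge E 1" by (simp add: topspace_bdry[OF wf] bdry_ge_def)
  then have xb: "bok E x" unfolding bdry_ge_def using bdry_iff[OF wf] by blast
  show "shift E x \<in> bdry E" using shift_bok[OF wf xb] bdry_iff[OF wf] by blast
next
  fix x n G assume "x \<in> topspace (subtopology (bdry_top E) (bdry_ge E 1))" and G: "finite G"
    and n: "enat n \<le> blen (shift E x)" and g: "\<forall>e\<in>G. eds (shift E x) n \<noteq> Some e"
  then have x: "x \<in> bdry_ge E 1" by (simp add: topspace_bdry[OF wf] bdry_ge_def)
  then have xb: "x \<in> bdry E" and x1: "enat 1 \<le> blen x" unfolding bdry_ge_def by auto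
  have xk: "bok E x" using xb bdry_iff[OF wf] by blast
  have n1: "enat (n + 1) \<le> blen x" using SL1[OF x1, of n] n by simp
  obtain e0 where e0: "eds x 0 = Some e0" using x1 by (auto simp: ge_eds)
  let ?U = "nb E x (n + 1) G \<inter> bdry_ge E 1"
  have "openin (subtopology (bdry_top E) (bdry_ge E 1)) ?U"
    using nb_open[OF wf xb n1 G] by (rule openin_subtopology_Int)
  moreover have "x \<in> ?U" using in_nb[OF xb] g x by (simp add: eds_shift)
  moreover have "\<forall>y\<in>?U. shift E y \<in> nb E (shift E x) n G"
  proof
    fix y assume y: "y \<in> ?U"
    then have yb: "y \<in> bdry E" and ag: "\<forall>i<n + 1. eds y i = eds x i" and gy: "\<forall>e\<in>G. eds y (n + 1) \<noteq> Some e"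
      unfolding nb_def by auto
    have yk: "bok E y" using yb bdry_iff[OF wf] by blast
    have "eds y 0 = Some e0" using ag e0 by simp
    then have "bsrc E (shift E y) = bsrc E (shift E x)" using bsrc_shift[OF yk] bsrc_shift[OF xk e0] by simp
    moreover have "shift E y \<in> bdry E" using shift_bok[OF wf yk] bdry_iff[OF wf] by blast
    ultimately show "shift E y \<in> nb E (shift E x) n G" using ag gy unfolding nb_def by (simp add: eds_shift)
  qed
  ultimately show "\<exists>U. openin (subtopology (bdry_top E) (bdry_ge E 1)) U \<and> x \<in> U \<and> (\<forall>y\<in>U. shift E y \<in> nb E (shift E x) n G)"
    by blast
qed

lemma shiftn_cont:
  assumes wf: "wf_graph E"
  shows "continuous_map (subtopology (bdry_top E) (bdry_ge E n)) (bdry_top E) (shift E ^^ n)"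
proof (induction n)
  case 0
  show ?case by (simp add: continuous_map_from_subtopology)
next
  case (Suc n)
  have c1: "continuous_map (subtopology (bdry_top E) (bdry_ge E (Suc n))) (bdry_top E) (shift E)"
    using continuous_map_from_subtopology_mono[OF shift_cont[OF wf] bdry_ge_mono[of 1 "Suc n"]] by simp
  have "shift E \<in> topspace (subtopology (bdry_top E) (bdry_ge E (Suc n))) \<rightarrow> bdry_ge E n"
  proof
    fix x assume "x \<in> topspace (subtopology (bdry_top E) (bdry_ge E (Suc n)))"
    then have "x \<in> bdry_ge E (n + 1)" by simp
    then show "shift E x \<in> bdry_ge E n" using shiftn_ge[OF wf, of x n 1] by simp
  qed
  then have c2: "continuous_map (subtopology (bdry_top E) (bdry_ge E (Suc n))) (subtopology (bdry_top E) (bdry_ge E n)) (shift E)"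
    using continuous_map_into_subtopology[OF c1] by blast
  have "continuous_map (subtopology (bdry_top E) (bdry_ge E (Suc n))) (bdry_top E) ((shift E ^^ n) \<circ> shift E)"
    using continuous_map_compose[OF c2 Suc.IH] .
  moreover have "shift E ^^ Suc n = (shift E ^^ n) \<circ> shift E" by (rule funpow_Suc_right)
  ultimately show ?case by (simp only:)
qed

lemma bsrc_pcat_fp:
  assumes p: "(v, es) \<in> fpaths E" and s: "bsrc E z = prange E (v, es)"
  shows "bsrc E (pcat (v, es) z) = v"
  by (rule bsrc_pcat) (use fpaths_D(3)[OF p] s in \<open>auto simp: prange_def\<close>)

lemma pcat_cont:
  assumes wf: "wf_graph E" and p: "(v, es) \<in> fpaths E"
  shows "continuous_map (subtopology (bdry_top E) {z \<in> bdry E. bsrc E z = prange E (v, es)}) (bdry_top E) (pcat (v, es))"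
proof (rule cont_bdry[OF wf])
  let ?D = "{z \<in> bdry E. bsrc E z = prange E (v, es)}"
  fix z assume "z \<in> topspace (subtopology (bdry_top E) ?D)"
  then have z: "z \<in> bdry E" "bsrc E z = prange E (v, es)" by (auto simp: topspace_bdry[OF wf])
  then show "pcat (v, es) z \<in> bdry E" using pcat_bok[OF p] bdry_iff[OF wf] by blast
next
  let ?D = "{z \<in> bdry E. bsrc E z = prange E (v, es)}"
  let ?L = "length es"
  fix z n G assume zt: "z \<in> topspace (subtopology (bdry_top E) ?D)" and G: "finite G"
    and n: "enat n \<le> blen (pcat (v, es) z)" and g: "\<forall>e\<in>G. eds (pcat (v, es) z) n \<noteq> Some e"
  then have z: "z \<in> bdry E" "bsrc E z = prange E (v, es)" by (auto simp: topspace_bdry[OF wf])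
  have bz: "bsrc E (pcat (v, es) z) = v" using bsrc_pcat_fp[OF p z(2)] .
  show "\<exists>U. openin (subtopology (bdry_top E) ?D) U \<and> z \<in> U \<and> (\<forall>y\<in>U. pcat (v, es) y \<in> nb E (pcat (v, es) z) n G)"
  proof (cases "n < ?L")
    case True
    let ?U = "topspace (subtopology (bdry_top E) ?D)"
    have "\<forall>y\<in>?U. pcat (v, es) y \<in> nb E (pcat (v, es) z) n G"
    proof
      fix y assume "y \<in> ?U"
      then have y: "y \<in> bdry E" "bsrc E y = prange E (v, es)" by (auto simp: topspace_bdry[OF wf])
      have "pcat (v, es) y \<in> bdry E" using pcat_bok[OF p] y bdry_iff[OF wf] by blast
      then show "pcat (v, es) y \<in> nb E (pcat (v, es) z) n G"
        unfolding nb_def using bsrc_pcat_fp[OF p y(2)] bz g True by (simp add: eds_pcat)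
    qed
    then show ?thesis using zt openin_topspace by blast
  next
    case False
    have nz: "enat (n - ?L) \<le> blen z"
      unfolding ge_eds
    proof (intro allI impI)
      fix j assume "j < n - ?L"
      then have "j + ?L < n" by simp
      then have "eds (pcat (v, es) z) (j + ?L) \<noteq> None" using n by (simp add: ge_eds)
      then show "eds z j \<noteq> None" by (simp add: eds_pcat)
    qed
    let ?U = "nb E z (n - ?L) G \<inter> ?D"
    have "openin (subtopology (bdry_top E) ?D) ?U"
      using nb_open[OF wf z(1) nz G] by (rule openin_subtopology_Int)
    moreover have "z \<in> ?U" using in_nb[OF z(1)] g False z by (simp add: eds_pcat)
    moreover have "\<forall>y\<in>?U. pcat (v, es) y \<in> nb E (pcat (v, es) z) n G"
    proof
      fix y assume y: "y \<in> ?U"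
      then have yb: "y \<in> bdry E" "bsrc E y = prange E (v, es)" and ag: "\<forall>i<n - ?L. eds y i = eds z i"
        and gy: "\<forall>e\<in>G. eds y (n - ?L) \<noteq> Some e" unfolding nb_def by auto
      have "pcat (v, es) y \<in> bdry E" using pcat_bok[OF p] yb bdry_iff[OF wf] by blast
      moreover have "\<forall>i<n. eds (pcat (v, es) y) i = eds (pcat (v, es) z) i"
      proof (intro allI impI)
        fix i assume "i < n"
        then show "eds (pcat (v, es) y) i = eds (pcat (v, es) z) i" using ag by (simp add: eds_pcat)
      qed
      ultimately show "pcat (v, es) y \<in> nb E (pcat (v, es) z) n G"
        unfolding nb_def using bsrc_pcat_fp[OF p yb(2)] bz gy False by (simp add: eds_pcat)
    qed
    ultimately show ?thesis by blast
  qed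
qed

lemma cyl_mem:
  assumes wf: "wf_graph E" and p: "(v, es) \<in> fpaths E" and x: "x \<in> cyl E (v, es)"
  obtains z where "x = pcat (v, es) z" "z \<in> bdry E" "bsrc E z = prange E (v, es)"
    "(shift E ^^ length es) x = z" "x \<in> bdry_ge E (length es)"
proof -
  obtain z where z: "x = pcat (v, es) z" "z \<in> bdry E" "bsrc E z = prange E (v, es)"
    using x unfolding cyl_def by blast
  have zk: "bok E z" using z(2) bdry_iff[OF wf] by blast
  have "(shift E ^^ length es) x = z" using SP[OF wf p zk z(3)] z(1) by simp
  moreover have "x \<in> bdry_ge E (length es)"
    unfolding bdry_ge_def using cyl_sub[OF wf p] x z(1) by (auto simp: ge_eds eds_pcat)
  ultimately show ?thesis using that z by blast
qed

lemma theta_cont: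
  assumes wf: "wf_graph E" and p1: "(v1, es1) \<in> fpaths E" and p2: "(v2, es2) \<in> fpaths E"
    and pr: "prange E (v1, es1) = prange E (v2, es2)"
  shows "continuous_map (subtopology (bdry_top E) (cyl E (v2, es2))) (bdry_top E)
           (\<lambda>x. pcat (v1, es1) ((shift E ^^ length es2) x))"
proof -
  have sub: "cyl E (v2, es2) \<subseteq> bdry_ge E (length es2)"
  proof
    fix x assume "x \<in> cyl E (v2, es2)"
    then obtain z where "x \<in> bdry_ge E (length es2)" by (rule cyl_mem[OF wf p2])
    then show "x \<in> bdry_ge E (length es2)" .
  qed
  have c1: "continuous_map (subtopology (bdry_top E) (cyl E (v2, es2))) (bdry_top E) (shift E ^^ length es2)"
    using continuous_map_from_subtopology_mono[OF shiftn_cont[OF wf] sub] .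
  have "(shift E ^^ length es2) \<in> topspace (subtopology (bdry_top E) (cyl E (v2, es2))) \<rightarrow> {z \<in> bdry E. bsrc E z = prange E (v1, es1)}"
  proof
    fix x assume "x \<in> topspace (subtopology (bdry_top E) (cyl E (v2, es2)))"
    then have "x \<in> cyl E (v2, es2)" by simp
    then obtain z where z: "z \<in> bdry E" "bsrc E z = prange E (v2, es2)" "(shift E ^^ length es2) x = z"
      by (rule cyl_mem[OF wf p2])
    then show "(shift E ^^ length es2) x \<in> {z \<in> bdry E. bsrc E z = prange E (v1, es1)}"
      using pr by simp
  qed
  then have c2: "continuous_map (subtopology (bdry_top E) (cyl E (v2, es2))) (subtopology (bdry_top E) {z \<in> bdry E. bsrc E z = prange E (v1, es1)}) (shift E ^^ length es2)"
    using continuous_map_into_subtopology[OF c1] by blast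
  show ?thesis using continuous_map_compose[OF c2 pcat_cont[OF wf p1]] by (simp add: o_def)
qed


section \<open>From graph orbit equivalence to action orbit equivalence\<close>

definition cstep :: "nat \<times> nat \<Rightarrow> nat \<times> nat \<Rightarrow> nat \<times> nat" where
  "cstep c kl = (fst kl + (max (snd kl) (fst c) - snd kl), snd c + (max (snd kl) (fst c) - fst c))"

fun cyc :: "('a \<Rightarrow> 'a) \<Rightarrow> ('a \<Rightarrow> nat) \<Rightarrow> ('a \<Rightarrow> nat) \<Rightarrow> nat \<Rightarrow> 'a \<Rightarrow> nat \<times> nat" where
  "cyc sh k l 0 x = (0, 0)"
| "cyc sh k l (Suc n) x = cstep (cyc sh k l n x) (k ((sh ^^ n) x), l ((sh ^^ n) x))"

lemma cyc_ok:
  assumes wf: "wf_graph E"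
    and H: "\<forall>x \<in> bdry_ge E 1. enat (k x) \<le> blen (\<phi> (shift E x)) \<and> enat (l x) \<le> blen (\<phi> x)
      \<and> (shift F ^^ k x) (\<phi> (shift E x)) = (shift F ^^ l x) (\<phi> x)"
  shows "x \<in> bdry_ge E n \<Longrightarrow> enat (fst (cyc (shift E) k l n x)) \<le> blen (\<phi> ((shift E ^^ n) x))
     \<and> enat (snd (cyc (shift E) k l n x)) \<le> blen (\<phi> x)
     \<and> (shift F ^^ fst (cyc (shift E) k l n x)) (\<phi> ((shift E ^^ n) x)) = (shift F ^^ snd (cyc (shift E) k l n x)) (\<phi> x)"
proof (induction n arbitrary: x)
  case 0 then show ?case by (simp add: zero_enat_def[symmetric])
next
  case (Suc n)
  have xn: "x \<in> bdry_ge E n" using Suc.prems bdry_ge_mono[of n "Suc n"] by auto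
  note IH = Suc.IH[OF xn]
  let ?y = "(shift E ^^ n) x"
  have y1: "?y \<in> bdry_ge E 1" using shiftn_ge[OF wf, of x 1 n] Suc.prems by (simp add: add.commute)
  note Hy = H[rule_format, OF y1]
  let ?p = "fst (cyc (shift E) k l n x)" and ?q = "snd (cyc (shift E) k l n x)"
  have C: "(shift F ^^ (k ?y + (max (l ?y) ?p - l ?y))) (\<phi> (shift E ?y)) = (shift F ^^ (?q + (max (l ?y) ?p - ?p))) (\<phi> x)
      \<and> enat (k ?y + (max (l ?y) ?p - l ?y)) \<le> blen (\<phi> (shift E ?y)) \<and> enat (?q + (max (l ?y) ?p - ?p)) \<le> blen (\<phi> x)"
    using comb[OF conjunct2[OF conjunct2[OF Hy]] conjunct1[OF Hy] conjunct1[OF conjunct2[OF Hy]]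
      conjunct2[OF conjunct2[OF IH]] conjunct1[OF IH] conjunct1[OF conjunct2[OF IH]]] .
  have "(shift E ^^ Suc n) x = shift E ?y" by simp
  then show ?case using C by (simp add: cstep_def)
qed

lemma lc_ptake:
  assumes wf: "wf_graph F" and A: "lc X A" and g: "continuous_map X (bdry_top F) g"
    and v: "\<And>x. x \<in> topspace X \<Longrightarrow> enat (A x) \<le> blen (g x)"
  shows "lc X (\<lambda>x. ptake F (A x) (g x))"
  unfolding lc_def
proof
  fix x assume x: "x \<in> topspace X"
  obtain U1 where U1: "openin X U1" "x \<in> U1" "\<forall>y\<in>U1. A y = A x" using A x unfolding lc_def by blast
  have gx: "g x \<in> bdry F" using continuous_map_image_subset_topspace[OF g] x topspace_bdry[OF wf] by blast
  have o: "openin (bdry_top F) (nb F (g x) (A x) {})" using nb_open[OF wf gx v[OF x]] by simp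
  have "\<forall>U. openin (bdry_top F) U \<longrightarrow> openin X {x \<in> topspace X. g x \<in> U}" using g unfolding continuous_map_def by (elim conjE)
  then have U2: "openin X {y \<in> topspace X. g y \<in> nb F (g x) (A x) {}}" using o by blast
  have "x \<in> U1 \<inter> {y \<in> topspace X. g y \<in> nb F (g x) (A x) {}}" using U1(2) x in_nb[OF gx, of "{}"] by blast
  moreover have "\<forall>y\<in>U1 \<inter> {y \<in> topspace X. g y \<in> nb F (g x) (A x) {}}. ptake F (A y) (g y) = ptake F (A x) (g x)"
  proof
    fix y assume y: "y \<in> U1 \<inter> {y \<in> topspace X. g y \<in> nb F (g x) (A x) {}}"
    then have Ay: "A y = A x" using U1(3) by blast
    have "bsrc F (g y) = bsrc F (g x)" "\<forall>i<A x. eds (g y) i = eds (g x) i" using y unfolding nb_def by auto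
    then show "ptake F (A y) (g y) = ptake F (A x) (g x)" unfolding ptake_def Ay by simp
  qed
  ultimately show "\<exists>U. openin X U \<and> x \<in> U \<and> (\<forall>y\<in>U. ptake F (A y) (g y) = ptake F (A x) (g x))"
    using openin_Int[OF U1(1) U2] by blast
qed

definition thf :: "('v, 'e) dgraph \<Rightarrow> 'v \<times> 'e list \<Rightarrow> 'v \<times> 'e list \<Rightarrow> ('v, 'e) bpath \<Rightarrow> ('v, 'e) bpath" where
  "thf E \<mu> \<nu> x = pcat \<mu> ((shift E ^^ length (snd \<nu>)) x)"

definition ABf :: "nat \<times> nat \<Rightarrow> nat \<times> nat \<Rightarrow> nat \<times> nat" where
  "ABf c1 c2 = (snd c1 + (max (fst c1) (fst c2) - fst c1), snd c2 + (max (fst c1) (fst c2) - fst c2))"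

definition abf where
  "abf E F \<phi> k l \<mu> \<nu> x = (let ab = ABf (cyc (shift E) k l (length (snd \<nu>)) x) (cyc (shift E) k l (length (snd \<mu>)) (thf E \<mu> \<nu> x))
     in Some (ptake F (snd ab) (\<phi> (thf E \<mu> \<nu> x)), ptake F (fst ab) (\<phi> x)))"

lemma ab_ok:
  assumes wfE: "wf_graph E" and wfF: "wf_graph F" and phi: "\<And>x. x \<in> bdry E \<Longrightarrow> \<phi> x \<in> bdry F"
    and H: "\<forall>x \<in> bdry_ge E 1. enat (k x) \<le> blen (\<phi> (shift E x)) \<and> enat (l x) \<le> blen (\<phi> x)
      \<and> (shift F ^^ k x) (\<phi> (shift E x)) = (shift F ^^ l x) (\<phi> x)"
    and p1: "(v1, es1) \<in> fpaths E" and p2: "(v2, es2) \<in> fpaths E" and pr: "prange E (v1, es1) = prange E (v2, es2)"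
    and x: "x \<in> cyl E (v2, es2)"
  shows "enat (fst (ABf (cyc (shift E) k l (length es2) x) (cyc (shift E) k l (length es1) (thf E (v1, es1) (v2, es2) x)))) \<le> blen (\<phi> x)
    \<and> enat (snd (ABf (cyc (shift E) k l (length es2) x) (cyc (shift E) k l (length es1) (thf E (v1, es1) (v2, es2) x)))) \<le> blen (\<phi> (thf E (v1, es1) (v2, es2) x))
    \<and> abf E F \<phi> k l (v1, es1) (v2, es2) x \<in> graph_semigroup F
    \<and> \<phi> x \<in> can_dom F (abf E F \<phi> k l (v1, es1) (v2, es2) x)
    \<and> \<phi> (can_act E (Some ((v1, es1), (v2, es2))) x) = can_act F (abf E F \<phi> k l (v1, es1) (v2, es2) x) (\<phi> x)"
proof -
  obtain z where z: "x = pcat (v2, es2) z" "z \<in> bdry E" "bsrc E z = prange E (v2, es2)"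
    "(shift E ^^ length es2) x = z" "x \<in> bdry_ge E (length es2)"
    by (rule cyl_mem[OF wfE p2 x])
  let ?y = "thf E (v1, es1) (v2, es2) x"
  have y: "?y = pcat (v1, es1) z" unfolding thf_def using z(4) by simp
  have zk: "bok E z" using z(2) bdry_iff[OF wfE] by blast
  have zs1: "bsrc E z = prange E (v1, es1)" using z(3) pr by simp
  have yc: "?y \<in> cyl E (v1, es1)" unfolding y cyl_def using z(2) zs1 by blast
  obtain z' where z': "?y = pcat (v1, es1) z'" "z' \<in> bdry E" "bsrc E z' = prange E (v1, es1)" "(shift E ^^ length es1) ?y = z'" "?y \<in> bdry_ge E (length es1)"
    by (rule cyl_mem[OF wfE p1 yc])
  have zz: "(shift E ^^ length es1) ?y = z" using SP[OF wfE p1 zk zs1] y by simp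
  have act: "can_act E (Some ((v1, es1), (v2, es2))) x = ?y" using can_act_eq[OF wfE p2 z(2) z(3)] z(1) y by simp
  let ?c1 = "cyc (shift E) k l (length es2) x" and ?c2 = "cyc (shift E) k l (length es1) ?y"
  have C1: "enat (fst ?c1) \<le> blen (\<phi> z) \<and> enat (snd ?c1) \<le> blen (\<phi> x) \<and> (shift F ^^ fst ?c1) (\<phi> z) = (shift F ^^ snd ?c1) (\<phi> x)"
    using cyc_ok[OF wfE H z(5)] z(4) by simp
  have C2: "enat (fst ?c2) \<le> blen (\<phi> z) \<and> enat (snd ?c2) \<le> blen (\<phi> ?y) \<and> (shift F ^^ fst ?c2) (\<phi> z) = (shift F ^^ snd ?c2) (\<phi> ?y)"
    using cyc_ok[OF wfE H z'(5)] zz by simp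
  have C: "(shift F ^^ (snd ?c1 + (max (fst ?c1) (fst ?c2) - fst ?c1))) (\<phi> x) = (shift F ^^ (snd ?c2 + (max (fst ?c1) (fst ?c2) - fst ?c2))) (\<phi> ?y)
      \<and> enat (snd ?c1 + (max (fst ?c1) (fst ?c2) - fst ?c1)) \<le> blen (\<phi> x) \<and> enat (snd ?c2 + (max (fst ?c1) (fst ?c2) - fst ?c2)) \<le> blen (\<phi> ?y)"
  proof -
    have c1a: "enat (fst ?c1) \<le> blen (\<phi> z)" and c1b: "enat (snd ?c1) \<le> blen (\<phi> x)"
      and c1c: "(shift F ^^ fst ?c1) (\<phi> z) = (shift F ^^ snd ?c1) (\<phi> x)" using C1 by blast+
    have c2a: "enat (fst ?c2) \<le> blen (\<phi> z)" and c2b: "enat (snd ?c2) \<le> blen (\<phi> ?y)"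
      and c2c: "(shift F ^^ fst ?c2) (\<phi> z) = (shift F ^^ snd ?c2) (\<phi> ?y)" using C2 by blast+
    show ?thesis using comb[OF c1c[symmetric] c1b c1a c2c c2a c2b] .
  qed
  define A where "A = fst (ABf ?c1 ?c2)"
  define B where "B = snd (ABf ?c1 ?c2)"
  have AB: "(shift F ^^ A) (\<phi> x) = (shift F ^^ B) (\<phi> ?y)" "enat A \<le> blen (\<phi> x)" "enat B \<le> blen (\<phi> ?y)"
    using C unfolding A_def B_def ABf_def by simp_all
  have xb: "x \<in> bdry E" using z(5) unfolding bdry_ge_def by blast
  have yb: "?y \<in> bdry E" using z'(5) unfolding bdry_ge_def by blast
  have X: "\<phi> x \<in> bdry F" "bok F (\<phi> x)" using phi[OF xb] bdry_iff[OF wfF] by auto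
  have Y: "\<phi> ?y \<in> bdry F" "bok F (\<phi> ?y)" using phi[OF yb] bdry_iff[OF wfF] by auto
  let ?w = "(shift F ^^ A) (\<phi> x)"
  obtain va esa where a: "ptake F A (\<phi> x) = (va, esa)" by (cases "ptake F A (\<phi> x)")
  obtain vb esb where b: "ptake F B (\<phi> ?y) = (vb, esb)" by (cases "ptake F B (\<phi> ?y)")
  have pa: "(va, esa) \<in> fpaths F" using ptake_fpaths[OF X(2) AB(2)] a by simp
  have pb: "(vb, esb) \<in> fpaths F" using ptake_fpaths[OF Y(2) AB(3)] b by simp
  have pra: "prange F (va, esa) = bsrc F ?w" using ptake_prange[OF wfF X(2) AB(2)] a by simp
  have prb: "prange F (vb, esb) = bsrc F ?w" using ptake_prange[OF wfF Y(2) AB(3)] b AB(1) by simp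
  have la: "length esa = A" using arg_cong[OF a, of "\<lambda>p. length (snd p)"] by simp
  have lb: "length esb = B" using arg_cong[OF b, of "\<lambda>p. length (snd p)"] by simp
  have xa: "\<phi> x \<in> cyl F (va, esa)"
  proof -
    have "va = bsrc F (\<phi> x)" using arg_cong[OF a, of fst] by simp
    moreover have "\<forall>i<length esa. eds (\<phi> x) i = Some (esa ! i)"
    proof (intro allI impI)
      fix i assume i: "i < length esa"
      then have "esa ! i = the (eds (\<phi> x) i)" using ptake_nth[of i A F "\<phi> x"] la unfolding a by simp
      moreover have "eds (\<phi> x) i \<noteq> None" using AB(2) i la by (simp add: ge_eds)
      ultimately show "eds (\<phi> x) i = Some (esa ! i)" by simp
    qed
    moreover have h: "esa \<noteq> [] \<longrightarrow> src F (hd esa) = va" using fpaths_D(3)[OF pa] by blast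
    ultimately show ?thesis using cyl_iff[OF wfF X(2) h] by simp
  qed
  have yb': "\<phi> ?y \<in> cyl F (vb, esb)"
  proof -
    have "vb = bsrc F (\<phi> ?y)" using arg_cong[OF b, of fst] by simp
    moreover have "\<forall>i<length esb. eds (\<phi> ?y) i = Some (esb ! i)"
    proof (intro allI impI)
      fix i assume i: "i < length esb"
      then have "esb ! i = the (eds (\<phi> ?y) i)" using ptake_nth[of i B F "\<phi> ?y"] lb unfolding b by simp
      moreover have "eds (\<phi> ?y) i \<noteq> None" using AB(3) i lb by (simp add: ge_eds)
      ultimately show "eds (\<phi> ?y) i = Some (esb ! i)" by simp
    qed
    moreover have h: "esb \<noteq> [] \<longrightarrow> src F (hd esb) = vb" using fpaths_D(3)[OF pb] by blast
    ultimately show ?thesis using cyl_iff[OF wfF Y(2) h] by simp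
  qed
  obtain w1 where w1: "\<phi> x = pcat (va, esa) w1" "w1 \<in> bdry F" "bsrc F w1 = prange F (va, esa)" "(shift F ^^ length esa) (\<phi> x) = w1"
    "\<phi> x \<in> bdry_ge F (length esa)" by (rule cyl_mem[OF wfF pa xa])
  obtain w2 where w2: "\<phi> ?y = pcat (vb, esb) w2" "w2 \<in> bdry F" "bsrc F w2 = prange F (vb, esb)"
    "(shift F ^^ length esb) (\<phi> ?y) = w2" "\<phi> ?y \<in> bdry_ge F (length esb)"
    by (rule cyl_mem[OF wfF pb yb'])
  have ww1: "w1 = ?w" using w1(4) la by simp
  have ww2: "w2 = ?w" using w2(4) lb AB(1) by simp
  have abf_eq: "abf E F \<phi> k l (v1, es1) (v2, es2) x = Some ((vb, esb), (va, esa))"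
    unfolding abf_def Let_def snd_conv A_def[symmetric] B_def[symmetric] a b by (rule refl)
  have e1: "can_act F (Some ((vb, esb), (va, esa))) (pcat (va, esa) w1) = pcat (vb, esb) w1"
    by (rule can_act_eq[OF wfF pa w1(2) w1(3)])
  have e2: "can_act F (Some ((vb, esb), (va, esa))) (\<phi> x) = pcat (vb, esb) w1"
    using e1 unfolding w1(1)[symmetric] .
  have e3: "\<phi> ?y = pcat (vb, esb) w1" using w2(1) ww1 ww2 by simp
  have eqa: "can_act F (Some ((vb, esb), (va, esa))) (\<phi> x) = \<phi> ?y" using e2 e3 by simp
  have inS: "Some ((vb, esb), (va, esa)) \<in> graph_semigroup F"
    unfolding graph_semigroup_def
    apply (rule UnI2)
    apply (rule CollectI)
    apply (rule exI[of _ "(vb, esb)"])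
    apply (rule exI[of _ "(va, esa)"])
    using pa pb pra prb by simp
  have AB2': "enat (fst (ABf ?c1 ?c2)) \<le> blen (\<phi> x)" using AB(2) unfolding A_def .
  have AB3': "enat (snd (ABf ?c1 ?c2)) \<le> blen (\<phi> ?y)" using AB(3) unfolding B_def .
  show ?thesis
  proof (intro conjI)
    show "abf E F \<phi> k l (v1, es1) (v2, es2) x \<in> graph_semigroup F" unfolding abf_eq by (rule inS)
    show "\<phi> x \<in> can_dom F (abf E F \<phi> k l (v1, es1) (v2, es2) x)" unfolding abf_eq using xa by simp
    show "\<phi> (can_act E (Some ((v1, es1), v2, es2)) x) = can_act F (abf E F \<phi> k l (v1, es1) (v2, es2) x) (\<phi> x)"
      unfolding abf_eq act by (rule eqa[symmetric])
  qed (rule AB2', rule AB3')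
qed


lemma lc_map:
  assumes "lc X f" shows "lc X (\<lambda>x. h (f x))"
  unfolding lc_def
proof
  fix x assume x: "x \<in> topspace X"
  obtain U where U: "openin X U" "x \<in> U" "\<forall>y\<in>U. f y = f x" using assms x unfolding lc_def by blast
  have "\<forall>y\<in>U. h (f y) = h (f x)" using U(3) by simp
  then show "\<exists>U. openin X U \<and> x \<in> U \<and> (\<forall>y\<in>U. h (f y) = h (f x))" using U(1,2) by blast
qed

lemma lc_empty: "lc (subtopology X {}) f"
  unfolding lc_def by simp

lemma cyc_lc:
  assumes wf: "wf_graph E" and lck: "lc (subtopology (bdry_top E) (bdry_ge E 1)) k"
    and lcl: "lc (subtopology (bdry_top E) (bdry_ge E 1)) l"
  shows "lc (subtopology (bdry_top E) (bdry_ge E n)) (cyc (shift E) k l n)"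
proof (induction n)
  case 0
  have "cyc (shift E) k l 0 = (\<lambda>x. (0, 0))" by (rule ext) simp
  then show ?case using lc_const[of _ "(0::nat, 0::nat)"] by simp
next
  case (Suc n)
  let ?X = "subtopology (bdry_top E) (bdry_ge E (Suc n))"
  have h1: "lc ?X (cyc (shift E) k l n)" using lc_mono[OF Suc.IH bdry_ge_mono[of n "Suc n"]] by simp
  have c0: "continuous_map ?X (bdry_top E) (shift E ^^ n)"
    using continuous_map_from_subtopology_mono[OF shiftn_cont[OF wf, of n] bdry_ge_mono[of n "Suc n"]] by simp
  have "(shift E ^^ n) \<in> topspace ?X \<rightarrow> bdry_ge E 1"
  proof
    fix x assume "x \<in> topspace ?X"
    then have "x \<in> bdry_ge E (1 + n)" by simp
    then show "(shift E ^^ n) x \<in> bdry_ge E 1" by (rule shiftn_ge[OF wf])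
  qed
  then have c: "continuous_map ?X (subtopology (bdry_top E) (bdry_ge E 1)) (shift E ^^ n)"
    using continuous_map_into_subtopology[OF c0] by blast
  have h2: "lc ?X (\<lambda>x. k ((shift E ^^ n) x))" by (rule lc_comp[OF c lck])
  have h3: "lc ?X (\<lambda>x. l ((shift E ^^ n) x))" by (rule lc_comp[OF c lcl])
  have h4: "lc ?X (\<lambda>x. (k ((shift E ^^ n) x), l ((shift E ^^ n) x)))" using lc_combine[OF h2 h3, of Pair] by simp
  have h5: "lc ?X (\<lambda>x. cstep (cyc (shift E) k l n x) (k ((shift E ^^ n) x), l ((shift E ^^ n) x)))"
    using lc_combine[OF h1 h4, of cstep] by simp
  have "cyc (shift E) k l (Suc n) = (\<lambda>x. cstep (cyc (shift E) k l n x) (k ((shift E ^^ n) x), l ((shift E ^^ n) x)))"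
    by (rule ext) simp
  then show ?case using h5 by simp
qed

lemma cyl_ge:
  assumes wf: "wf_graph E" and p: "(v, es) \<in> fpaths E" and x: "x \<in> cyl E (v, es)"
  shows "x \<in> bdry_ge E (length es)"
proof -
  obtain z where "x = pcat (v, es) z" "z \<in> bdry E" "bsrc E z = prange E (v, es)"
    "(shift E ^^ length es) x = z" "x \<in> bdry_ge E (length es)"
    by (rule cyl_mem[OF wf p x])
  then show ?thesis by simp
qed

lemma thf_mem:
  assumes wf: "wf_graph E" and p1: "(v1, es1) \<in> fpaths E" and p2: "(v2, es2) \<in> fpaths E"
    and pr: "prange E (v1, es1) = prange E (v2, es2)" and x: "x \<in> cyl E (v2, es2)"
  shows "thf E (v1, es1) (v2, es2) x \<in> cyl E (v1, es1)"
proof -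
  obtain z where z: "x = pcat (v2, es2) z" "z \<in> bdry E" "bsrc E z = prange E (v2, es2)"
    "(shift E ^^ length es2) x = z" "x \<in> bdry_ge E (length es2)"
    by (rule cyl_mem[OF wf p2 x])
  have "thf E (v1, es1) (v2, es2) x = pcat (v1, es1) z" unfolding thf_def using z(4) by simp
  then show ?thesis unfolding cyl_def using z(2,3) pr by auto
qed

lemma abf_lc:
  assumes wfE: "wf_graph E" and wfF: "wf_graph F" and c\<phi>: "continuous_map (bdry_top E) (bdry_top F) \<phi>"
    and H: "\<forall>x \<in> bdry_ge E 1. enat (k x) \<le> blen (\<phi> (shift E x)) \<and> enat (l x) \<le> blen (\<phi> x)
      \<and> (shift F ^^ k x) (\<phi> (shift E x)) = (shift F ^^ l x) (\<phi> x)"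
    and lck: "lc (subtopology (bdry_top E) (bdry_ge E 1)) k"
    and lcl: "lc (subtopology (bdry_top E) (bdry_ge E 1)) l"
    and p1: "(v1, es1) \<in> fpaths E" and p2: "(v2, es2) \<in> fpaths E" and pr: "prange E (v1, es1) = prange E (v2, es2)"
  shows "lc (subtopology (bdry_top E) (cyl E (v2, es2))) (abf E F \<phi> k l (v1, es1) (v2, es2))"
proof -
  let ?X = "subtopology (bdry_top E) (cyl E (v2, es2))"
  let ?th = "thf E (v1, es1) (v2, es2)"
  have phi: "\<And>x. x \<in> bdry E \<Longrightarrow> \<phi> x \<in> bdry F"
    using continuous_map_image_subset_topspace[OF c\<phi>] topspace_bdry[OF wfE] topspace_bdry[OF wfF] by blast
  have th0: "continuous_map ?X (bdry_top E) ?th"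
    using theta_cont[OF wfE p1 p2 pr] unfolding thf_def by simp
  have "?th \<in> topspace ?X \<rightarrow> bdry_ge E (length es1)"
  proof
    fix x assume "x \<in> topspace ?X"
    then have "x \<in> cyl E (v2, es2)" by simp
    then show "?th x \<in> bdry_ge E (length es1)" using cyl_ge[OF wfE p1] thf_mem[OF wfE p1 p2 pr] by blast
  qed
  then have th: "continuous_map ?X (subtopology (bdry_top E) (bdry_ge E (length es1))) ?th"
    using continuous_map_into_subtopology[OF th0] by blast
  have sub: "cyl E (v2, es2) \<subseteq> bdry_ge E (length es2)" using cyl_ge[OF wfE p2] by blast
  have c1: "lc ?X (cyc (shift E) k l (length es2))"
    by (rule lc_mono[OF cyc_lc[OF wfE lck lcl] sub])
  have c2: "lc ?X (\<lambda>x. cyc (shift E) k l (length es1) (?th x))"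
    by (rule lc_comp[OF th cyc_lc[OF wfE lck lcl]])
  have ab: "lc ?X (\<lambda>x. ABf (cyc (shift E) k l (length es2) x) (cyc (shift E) k l (length es1) (?th x)))"
    using lc_combine[OF c1 c2, of ABf] by simp
  have A: "lc ?X (\<lambda>x. fst (ABf (cyc (shift E) k l (length es2) x) (cyc (shift E) k l (length es1) (?th x))))"
    using lc_map[OF ab, of fst] by simp
  have B: "lc ?X (\<lambda>x. snd (ABf (cyc (shift E) k l (length es2) x) (cyc (shift E) k l (length es1) (?th x))))"
    using lc_map[OF ab, of snd] by simp
  have cphi: "continuous_map ?X (bdry_top F) \<phi>" using c\<phi> by (rule continuous_map_from_subtopology)
  have cphith: "continuous_map ?X (bdry_top F) (\<lambda>x. \<phi> (?th x))"
    using continuous_map_compose[OF th0 c\<phi>] by (simp add: o_def)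
  have P: "lc ?X (\<lambda>x. ptake F (fst (ABf (cyc (shift E) k l (length es2) x) (cyc (shift E) k l (length es1) (?th x)))) (\<phi> x))"
  proof (rule lc_ptake[OF wfF A cphi])
    fix x assume "x \<in> topspace ?X"
    then have "x \<in> cyl E (v2, es2)" by simp
    then show "enat (fst (ABf (cyc (shift E) k l (length es2) x) (cyc (shift E) k l (length es1) (?th x)))) \<le> blen (\<phi> x)"
      using ab_ok[OF wfE wfF phi H p1 p2 pr] by blast
  qed
  have Q: "lc ?X (\<lambda>x. ptake F (snd (ABf (cyc (shift E) k l (length es2) x) (cyc (shift E) k l (length es1) (?th x)))) (\<phi> (?th x)))"
  proof (rule lc_ptake[OF wfF B cphith])
    fix x assume "x \<in> topspace ?X"
    then have "x \<in> cyl E (v2, es2)" by simp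
    then show "enat (snd (ABf (cyc (shift E) k l (length es2) x) (cyc (shift E) k l (length es1) (?th x)))) \<le> blen (\<phi> (?th x))"
      using ab_ok[OF wfE wfF phi H p1 p2 pr] by blast
  qed
  have R: "lc ?X (\<lambda>x. Some (ptake F (snd (ABf (cyc (shift E) k l (length es2) x) (cyc (shift E) k l (length es1) (?th x)))) (\<phi> (?th x)),
       ptake F (fst (ABf (cyc (shift E) k l (length es2) x) (cyc (shift E) k l (length es1) (?th x)))) (\<phi> x)))"
    using lc_combine[OF Q P, of "\<lambda>a b. Some (a, b)"] by simp
  have "abf E F \<phi> k l (v1, es1) (v2, es2) = (\<lambda>x. Some (ptake F (snd (ABf (cyc (shift E) k l (length es2) x) (cyc (shift E) k l (length es1) (?th x)))) (\<phi> (?th x)),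
       ptake F (fst (ABf (cyc (shift E) k l (length es2) x) (cyc (shift E) k l (length es1) (?th x)))) (\<phi> x)))"
    by (rule ext) (simp only: abf_def Let_def snd_conv)
  then show ?thesis using R by simp
qed

lemma gs_cases:
  assumes "s \<in> graph_semigroup E"
  obtains "s = None"
  | v1 es1 v2 es2 where "s = Some ((v1, es1), (v2, es2))" "(v1, es1) \<in> fpaths E" "(v2, es2) \<in> fpaths E"
      "prange E (v1, es1) = prange E (v2, es2)"
  using assms unfolding graph_semigroup_def by auto

lemma forward:
  assumes wfE: "wf_graph E" and wfF: "wf_graph F" and c\<phi>: "continuous_map (bdry_top E) (bdry_top F) \<phi>"
    and lck: "lc (subtopology (bdry_top E) (bdry_ge E 1)) k"
    and lcl: "lc (subtopology (bdry_top E) (bdry_ge E 1)) l"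
    and H: "\<forall>x \<in> bdry_ge E 1. enat (k x) \<le> blen (\<phi> (shift E x)) \<and> enat (l x) \<le> blen (\<phi> x)
      \<and> (shift F ^^ k x) (\<phi> (shift E x)) = (shift F ^^ l x) (\<phi> x)"
  shows "\<exists>a. continuous_map (subtopology (prod_topology (discrete_topology (graph_semigroup E)) (bdry_top E))
              {(s, x). s \<in> graph_semigroup E \<and> x \<in> can_dom E s}) (discrete_topology (graph_semigroup F)) a
     \<and> (\<forall>s \<in> graph_semigroup E. \<forall>x \<in> can_dom E s. \<phi> x \<in> can_dom F (a (s, x)) \<and> \<phi> (can_act E s x) = can_act F (a (s, x)) (\<phi> x))"
proof -
  have phi: "\<And>x. x \<in> bdry E \<Longrightarrow> \<phi> x \<in> bdry F"
    using continuous_map_image_subset_topspace[OF c\<phi>] topspace_bdry[OF wfE] topspace_bdry[OF wfF] by blast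
  define a where "a = (\<lambda>p. case fst p of None \<Rightarrow> None | Some (\<mu>, \<nu>) \<Rightarrow> abf E F \<phi> k l \<mu> \<nu> (snd p))"
  have aS: "a (Some ((v1, es1), (v2, es2)), x) = abf E F \<phi> k l (v1, es1) (v2, es2) x" for v1 es1 v2 es2 x
    unfolding a_def by simp
  have good: "a (s, x) \<in> graph_semigroup F \<and> \<phi> x \<in> can_dom F (a (s, x)) \<and> \<phi> (can_act E s x) = can_act F (a (s, x)) (\<phi> x)"
    if s: "s \<in> graph_semigroup E" and x: "x \<in> can_dom E s" for s x
    using s
  proof (cases rule: gs_cases)
    case 1 then show ?thesis using x by simp
  next
    case (2 v1 es1 v2 es2)
    then have "x \<in> cyl E (v2, es2)" using x by simp
    then show ?thesis using ab_ok[OF wfE wfF phi H 2(2) 2(3) 2(4)] 2(1) aS by simp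
  qed
  have lcs: "\<forall>s\<in>graph_semigroup E. lc (subtopology (bdry_top E) (can_dom E s)) (\<lambda>x. a (s, x))"
  proof
    fix s assume s: "s \<in> graph_semigroup E"
    then show "lc (subtopology (bdry_top E) (can_dom E s)) (\<lambda>x. a (s, x))"
    proof (cases rule: gs_cases)
      case 1 then show ?thesis using lc_empty[of "bdry_top E" "\<lambda>x. a (s, x)"] by simp
    next
      case (2 v1 es1 v2 es2)
      have "(\<lambda>x. a (s, x)) = abf E F \<phi> k l (v1, es1) (v2, es2)" using 2(1) aS by (intro ext) simp
      then show ?thesis using abf_lc[OF wfE wfF c\<phi> H lck lcl 2(2) 2(3) 2(4)] 2(1) by simp
    qed
  qed
  have "continuous_map (subtopology (prod_topology (discrete_topology (graph_semigroup E)) (bdry_top E))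
              {(s, x). s \<in> graph_semigroup E \<and> x \<in> can_dom E s}) (discrete_topology (graph_semigroup F)) a"
    unfolding cont_discrete_iff
  proof
    show "a ` topspace (subtopology (prod_topology (discrete_topology (graph_semigroup E)) (bdry_top E))
              {(s, x). s \<in> graph_semigroup E \<and> x \<in> can_dom E s}) \<subseteq> graph_semigroup F"
    proof
      fix t assume "t \<in> a ` topspace (subtopology (prod_topology (discrete_topology (graph_semigroup E)) (bdry_top E))
              {(s, x). s \<in> graph_semigroup E \<and> x \<in> can_dom E s})"
      then obtain s x where "t = a (s, x)" "s \<in> graph_semigroup E" "x \<in> can_dom E s" by auto
      then show "t \<in> graph_semigroup F" using good by blast
    qed
    show "lc (subtopology (prod_topology (discrete_topology (graph_semigroup E)) (bdry_top E))
              {(s, x). s \<in> graph_semigroup E \<and> x \<in> can_dom E s}) a"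
      by (rule lc_prod[OF lcs])
  qed
  then show ?thesis using good by blast
qed


section \<open>From action orbit equivalence to graph orbit equivalence\<close>

lemma pcat_nil: "bsrc E z = v \<Longrightarrow> pcat (v, []) z = z"
  by (cases z) auto

definition sxf :: "('v, 'e) dgraph \<Rightarrow> ('v, 'e) bpath \<Rightarrow> (('v \<times> 'e list) \<times> ('v \<times> 'e list)) option" where
  "sxf E x = Some ((rng E (the (eds x 0)), []), (bsrc E x, [the (eds x 0)]))"

lemma sxf_ok:
  assumes wf: "wf_graph E" and x: "x \<in> bdry_ge E 1"
  shows "sxf E x \<in> graph_semigroup E \<and> x \<in> can_dom E (sxf E x) \<and> can_act E (sxf E x) x = shift E x"
proof -
  have xb: "x \<in> bdry E" and x1: "enat 1 \<le> blen x" using x unfolding bdry_ge_def by auto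
  have xk: "bok E x" using xb bdry_iff[OF wf] by blast
  obtain e where e: "eds x 0 = Some e" using x1 by (auto simp: ge_eds)
  have ee: "e \<in> edges E" "src E e = bsrc E x" using xk e unfolding bok_def by blast+
  have pt: "ptake E 1 x = (bsrc E x, [e])" unfolding ptake_def using e by simp
  have p2: "(bsrc E x, [e]) \<in> fpaths E" using ptake_fpaths[OF xk x1] pt by simp
  have p1: "(rng E e, []) \<in> fpaths E" using wf ee(1) unfolding wf_graph_def fpaths_def by auto
  have pr: "prange E (rng E e, []) = prange E (bsrc E x, [e])" by (simp add: prange_def)
  have S: "sxf E x = Some ((rng E e, []), (bsrc E x, [e]))" unfolding sxf_def using e by simp
  have h: "[e] \<noteq> [] \<longrightarrow> src E (hd [e]) = bsrc E x" using ee(2) by simp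
  have xc: "x \<in> cyl E (bsrc E x, [e])" using cyl_iff[OF wf xk h] e by simp
  obtain z where z: "x = pcat (bsrc E x, [e]) z" "z \<in> bdry E" "bsrc E z = prange E (bsrc E x, [e])"
    "(shift E ^^ length [e]) x = z" "x \<in> bdry_ge E (length [e])"
    by (rule cyl_mem[OF wf p2 xc])
  have zs: "z = shift E x" using z(4) by simp
  have "can_act E (Some ((rng E e, []), (bsrc E x, [e]))) (pcat (bsrc E x, [e]) z) = pcat (rng E e, []) z"
    by (rule can_act_eq[OF wf p2 z(2) z(3)])
  also have "\<dots> = z" by (rule pcat_nil) (use z(3) in \<open>simp add: prange_def\<close>)
  finally have act: "can_act E (sxf E x) x = shift E x" using z(1) zs S by simp
  have inS: "sxf E x \<in> graph_semigroup E"
    unfolding S graph_semigroup_def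
    apply (rule UnI2)
    apply (rule CollectI)
    apply (rule exI[of _ "(rng E e, [])"])
    apply (rule exI[of _ "(bsrc E x, [e])"])
    using p1 p2 pr by simp
  show ?thesis using inS xc act S by simp
qed

lemma backward:
  assumes wfE: "wf_graph E" and wfF: "wf_graph F" and c\<phi>: "continuous_map (bdry_top E) (bdry_top F) \<phi>"
    and ca: "continuous_map (subtopology (prod_topology (discrete_topology (graph_semigroup E)) (bdry_top E))
              {(s, x). s \<in> graph_semigroup E \<and> x \<in> can_dom E s}) (discrete_topology (graph_semigroup F)) a"
    and P: "\<forall>s \<in> graph_semigroup E. \<forall>x \<in> can_dom E s. \<phi> x \<in> can_dom F (a (s, x)) \<and> \<phi> (can_act E s x) = can_act F (a (s, x)) (\<phi> x)"
  shows "\<exists>k l. continuous_map (subtopology (bdry_top E) (bdry_ge E 1)) (discrete_topology UNIV) (k :: _ \<Rightarrow> nat)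
     \<and> continuous_map (subtopology (bdry_top E) (bdry_ge E 1)) (discrete_topology UNIV) (l :: _ \<Rightarrow> nat)
     \<and> (\<forall>x \<in> bdry_ge E 1. enat (k x) \<le> blen (\<phi> (shift E x)) \<and> enat (l x) \<le> blen (\<phi> x)
        \<and> (shift F ^^ k x) (\<phi> (shift E x)) = (shift F ^^ l x) (\<phi> x))"
proof -
  let ?X1 = "subtopology (bdry_top E) (bdry_ge E 1)"
  let ?D = "{(s, x). s \<in> graph_semigroup E \<and> x \<in> can_dom E s}"
  let ?P = "subtopology (prod_topology (discrete_topology (graph_semigroup E)) (bdry_top E)) ?D"
  define k where "k = (\<lambda>x. length (snd (fst (the (a (sxf E x, x))))))"
  define l where "l = (\<lambda>x. length (snd (snd (the (a (sxf E x, x))))))"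
  have phi: "\<And>x. x \<in> bdry E \<Longrightarrow> \<phi> x \<in> bdry F"
    using continuous_map_image_subset_topspace[OF c\<phi>] topspace_bdry[OF wfE] topspace_bdry[OF wfF] by blast
  have top1: "topspace ?X1 = bdry_ge E 1" using topspace_bdry[OF wfE] unfolding bdry_ge_def by auto
  have aim: "a (s, x) \<in> graph_semigroup F" if "s \<in> graph_semigroup E" "x \<in> can_dom E s" "x \<in> bdry E" for s x
  proof -
    have "(s, x) \<in> topspace ?P" using that topspace_bdry[OF wfE] by simp
    then show ?thesis using continuous_map_image_subset_topspace[OF ca] by auto
  qed
  have csx: "continuous_map ?X1 (discrete_topology (graph_semigroup E)) (sxf E)"
    unfolding cont_discrete_iff
  proof
    show "sxf E ` topspace ?X1 \<subseteq> graph_semigroup E" using sxf_ok[OF wfE] top1 by auto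
    show "lc ?X1 (sxf E)"
      unfolding lc_def
    proof
      fix x assume "x \<in> topspace ?X1"
      then have x: "x \<in> bdry_ge E 1" using top1 by simp
      then have xb: "x \<in> bdry E" and x1: "enat 1 \<le> blen x" unfolding bdry_ge_def by auto
      have o: "openin ?X1 (nb E x 1 {} \<inter> bdry_ge E 1)"
        using nb_open[OF wfE xb x1 finite.emptyI] by (rule openin_subtopology_Int)
      have "x \<in> nb E x 1 {} \<inter> bdry_ge E 1" using in_nb[OF xb, of "{}"] x by blast
      moreover have "\<forall>y\<in>nb E x 1 {} \<inter> bdry_ge E 1. sxf E y = sxf E x"
      proof
        fix y assume "y \<in> nb E x 1 {} \<inter> bdry_ge E 1"
        then have "bsrc E y = bsrc E x" "eds y 0 = eds x 0" unfolding nb_def by auto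
        then show "sxf E y = sxf E x" unfolding sxf_def by simp
      qed
      ultimately show "\<exists>U. openin ?X1 U \<and> x \<in> U \<and> (\<forall>y\<in>U. sxf E y = sxf E x)" using o by blast
    qed
  qed
  have cid: "continuous_map ?X1 (bdry_top E) (\<lambda>x. x)" by simp
  have cg0: "continuous_map ?X1 (prod_topology (discrete_topology (graph_semigroup E)) (bdry_top E)) (\<lambda>x. (sxf E x, x))"
    by (rule continuous_map_pairedI[OF csx cid])
  have "(\<lambda>x. (sxf E x, x)) \<in> topspace ?X1 \<rightarrow> ?D"
  proof
    fix x assume "x \<in> topspace ?X1"
    then have "x \<in> bdry_ge E 1" using top1 by simp
    then show "(sxf E x, x) \<in> ?D" using sxf_ok[OF wfE] by auto
  qed
  then have cg: "continuous_map ?X1 ?P (\<lambda>x. (sxf E x, x))"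
    using continuous_map_into_subtopology[OF cg0] by blast
  have lca: "lc ?P a" using ca unfolding cont_discrete_iff by blast
  have lcg: "lc ?X1 (\<lambda>x. a (sxf E x, x))" by (rule lc_comp[OF cg lca])
  have ck: "continuous_map ?X1 (discrete_topology UNIV) k"
    unfolding cont_discrete_iff k_def using lc_map[OF lcg, of "\<lambda>t. length (snd (fst (the t)))"] by simp
  have cl: "continuous_map ?X1 (discrete_topology UNIV) l"
    unfolding cont_discrete_iff l_def using lc_map[OF lcg, of "\<lambda>t. length (snd (snd (the t)))"] by simp
  have good: "enat (k x) \<le> blen (\<phi> (shift E x)) \<and> enat (l x) \<le> blen (\<phi> x)
        \<and> (shift F ^^ k x) (\<phi> (shift E x)) = (shift F ^^ l x) (\<phi> x)" if x: "x \<in> bdry_ge E 1" for x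
  proof -
    have so: "sxf E x \<in> graph_semigroup E" "x \<in> can_dom E (sxf E x)" "can_act E (sxf E x) x = shift E x"
      using sxf_ok[OF wfE x] by blast+
    have xb: "x \<in> bdry E" using x unfolding bdry_ge_def by blast
    let ?t = "a (sxf E x, x)"
    have tS: "?t \<in> graph_semigroup F" using aim[OF so(1,2) xb] .
    have Pq: "\<phi> x \<in> can_dom F ?t \<and> \<phi> (can_act E (sxf E x) x) = can_act F ?t (\<phi> x)"
      using P so(1) so(2) by blast
    have Pt: "\<phi> x \<in> can_dom F ?t" "\<phi> (shift E x) = can_act F ?t (\<phi> x)" using Pq so(3) by simp_all
    show ?thesis using tS
    proof (cases rule: gs_cases)
      case 1 then show ?thesis using Pt by simp
    next
      case (2 w1 fs1 w2 fs2)
      have xc: "\<phi> x \<in> cyl F (w2, fs2)" using Pt(1) 2(1) by simp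
      obtain y where y: "\<phi> x = pcat (w2, fs2) y" "y \<in> bdry F" "bsrc F y = prange F (w2, fs2)"
        "(shift F ^^ length fs2) (\<phi> x) = y" "\<phi> x \<in> bdry_ge F (length fs2)"
        by (rule cyl_mem[OF wfF 2(3) xc])
      have "can_act F ?t (\<phi> x) = pcat (w1, fs1) y"
        using can_act_eq[OF wfF 2(3) y(2) y(3), of "(w1, fs1)"] y(1) 2(1) by simp
      then have sx: "\<phi> (shift E x) = pcat (w1, fs1) y" using Pt(2) by simp
      have ys1: "bsrc F y = prange F (w1, fs1)" using y(3) 2(4) by simp
      have sc: "\<phi> (shift E x) \<in> cyl F (w1, fs1)" unfolding sx cyl_def using y(2) ys1 by blast
      obtain y' where y': "\<phi> (shift E x) = pcat (w1, fs1) y'" "y' \<in> bdry F" "bsrc F y' = prange F (w1, fs1)"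
        "(shift F ^^ length fs1) (\<phi> (shift E x)) = y'" "\<phi> (shift E x) \<in> bdry_ge F (length fs1)"
        by (rule cyl_mem[OF wfF 2(2) sc])
      have yk: "bok F y" using y(2) bdry_iff[OF wfF] by blast
      have yy: "(shift F ^^ length fs1) (\<phi> (shift E x)) = y" using SP[OF wfF 2(2) yk ys1] sx by simp
      have kx: "k x = length fs1" and lx: "l x = length fs2" unfolding k_def l_def using 2(1) by simp_all
      show ?thesis using kx lx yy y(4) y(5) y'(5) unfolding bdry_ge_def by simp
    qed
  qed
  show ?thesis using ck cl good by blast
qed

theorem proposition9p12:
  fixes E :: "('v, 'e) dgraph" and F :: "('w, 'f) dgraph"
  assumes "wf_graph E" and "wf_graph F"
  shows "graph_coe E F \<longleftrightarrow>
    action_coe (graph_semigroup E) (bdry_top E) (can_dom E) (can_act E)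
               (graph_semigroup F) (bdry_top F) (can_dom F) (can_act F)"
proof
  assume "graph_coe E F"
  then obtain \<phi> \<psi> k l k' l' where hm: "homeomorphic_maps (bdry_top E) (bdry_top F) \<phi> \<psi>"
    and ck: "continuous_map (subtopology (bdry_top E) (bdry_ge E 1)) (discrete_topology UNIV) (k :: _ \<Rightarrow> nat)"
    and cl: "continuous_map (subtopology (bdry_top E) (bdry_ge E 1)) (discrete_topology UNIV) (l :: _ \<Rightarrow> nat)"
    and ck': "continuous_map (subtopology (bdry_top F) (bdry_ge F 1)) (discrete_topology UNIV) (k' :: _ \<Rightarrow> nat)"
    and cl': "continuous_map (subtopology (bdry_top F) (bdry_ge F 1)) (discrete_topology UNIV) (l' :: _ \<Rightarrow> nat)"
    and H: "\<forall>x \<in> bdry_ge E 1. enat (k x) \<le> blen (\<phi> (shift E x)) \<and> enat (l x) \<le> blen (\<phi> x)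
        \<and> (shift F ^^ k x) (\<phi> (shift E x)) = (shift F ^^ l x) (\<phi> x)"
    and H': "\<forall>y \<in> bdry_ge F 1. enat (k' y) \<le> blen (\<psi> (shift F y)) \<and> enat (l' y) \<le> blen (\<psi> y)
        \<and> (shift E ^^ k' y) (\<psi> (shift F y)) = (shift E ^^ l' y) (\<psi> y)"
    unfolding graph_coe_def by blast
  have c1: "continuous_map (bdry_top E) (bdry_top F) \<phi>" and c2: "continuous_map (bdry_top F) (bdry_top E) \<psi>"
    using hm unfolding homeomorphic_maps_def by blast+
  obtain a where a: "continuous_map (subtopology (prod_topology (discrete_topology (graph_semigroup E)) (bdry_top E))
              {(s, x). s \<in> graph_semigroup E \<and> x \<in> can_dom E s}) (discrete_topology (graph_semigroup F)) a"
     "\<forall>s \<in> graph_semigroup E. \<forall>x \<in> can_dom E s. \<phi> x \<in> can_dom F (a (s, x)) \<and> \<phi> (can_act E s x) = can_act F (a (s, x)) (\<phi> x)"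
    using forward[OF assms(1,2) c1 conjunct2[OF ck[unfolded cont_discrete_iff]] conjunct2[OF cl[unfolded cont_discrete_iff]] H]
    by blast
  obtain b where b: "continuous_map (subtopology (prod_topology (discrete_topology (graph_semigroup F)) (bdry_top F))
              {(t, y). t \<in> graph_semigroup F \<and> y \<in> can_dom F t}) (discrete_topology (graph_semigroup E)) b"
     "\<forall>t \<in> graph_semigroup F. \<forall>y \<in> can_dom F t. \<psi> y \<in> can_dom E (b (t, y)) \<and> \<psi> (can_act F t y) = can_act E (b (t, y)) (\<psi> y)"
    using forward[OF assms(2,1) c2 conjunct2[OF ck'[unfolded cont_discrete_iff]] conjunct2[OF cl'[unfolded cont_discrete_iff]] H']
    by blast
  show "action_coe (graph_semigroup E) (bdry_top E) (can_dom E) (can_act E)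
               (graph_semigroup F) (bdry_top F) (can_dom F) (can_act F)"
    unfolding action_coe_def using hm a b by blast
next
  assume "action_coe (graph_semigroup E) (bdry_top E) (can_dom E) (can_act E)
               (graph_semigroup F) (bdry_top F) (can_dom F) (can_act F)"
  then obtain \<phi> \<psi> a b where hm: "homeomorphic_maps (bdry_top E) (bdry_top F) \<phi> \<psi>"
    and a: "continuous_map (subtopology (prod_topology (discrete_topology (graph_semigroup E)) (bdry_top E))
              {(s, x). s \<in> graph_semigroup E \<and> x \<in> can_dom E s}) (discrete_topology (graph_semigroup F)) a"
    and b: "continuous_map (subtopology (prod_topology (discrete_topology (graph_semigroup F)) (bdry_top F))
              {(t, y). t \<in> graph_semigroup F \<and> y \<in> can_dom F t}) (discrete_topology (graph_semigroup E)) b"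
    and Pa: "\<forall>s \<in> graph_semigroup E. \<forall>x \<in> can_dom E s. \<phi> x \<in> can_dom F (a (s, x)) \<and> \<phi> (can_act E s x) = can_act F (a (s, x)) (\<phi> x)"
    and Pb: "\<forall>t \<in> graph_semigroup F. \<forall>y \<in> can_dom F t. \<psi> y \<in> can_dom E (b (t, y)) \<and> \<psi> (can_act F t y) = can_act E (b (t, y)) (\<psi> y)"
    unfolding action_coe_def by blast
  have c1: "continuous_map (bdry_top E) (bdry_top F) \<phi>" and c2: "continuous_map (bdry_top F) (bdry_top E) \<psi>"
    using hm unfolding homeomorphic_maps_def by blast+
  obtain k l where kl: "continuous_map (subtopology (bdry_top E) (bdry_ge E 1)) (discrete_topology UNIV) (k :: _ \<Rightarrow> nat)"
     "continuous_map (subtopology (bdry_top E) (bdry_ge E 1)) (discrete_topology UNIV) (l :: _ \<Rightarrow> nat)"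
     "\<forall>x \<in> bdry_ge E 1. enat (k x) \<le> blen (\<phi> (shift E x)) \<and> enat (l x) \<le> blen (\<phi> x)
        \<and> (shift F ^^ k x) (\<phi> (shift E x)) = (shift F ^^ l x) (\<phi> x)"
    using backward[OF assms(1,2) c1 a Pa] by blast
  obtain k' l' where kl': "continuous_map (subtopology (bdry_top F) (bdry_ge F 1)) (discrete_topology UNIV) (k' :: _ \<Rightarrow> nat)"
     "continuous_map (subtopology (bdry_top F) (bdry_ge F 1)) (discrete_topology UNIV) (l' :: _ \<Rightarrow> nat)"
     "\<forall>y \<in> bdry_ge F 1. enat (k' y) \<le> blen (\<psi> (shift F y)) \<and> enat (l' y) \<le> blen (\<psi> y)
        \<and> (shift E ^^ k' y) (\<psi> (shift F y)) = (shift E ^^ l' y) (\<psi> y)"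
    using backward[OF assms(2,1) c2 b Pb] by blast
  show "graph_coe E F" unfolding graph_coe_def using hm kl kl' by blast
qed

end
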